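(* Let $\alpha\in(0,1)$ be a fixed constant, and for each $n$ let $m,s,t$ be integers with $m/n=t/s=\alpha$, $t\ge 3$, $s\le n^{c_0}$ for an absolute constant $0<c_0<1$. Let $G^*=(V_L,V_R,E^* )$ be drawn uniformly from $\mathcal{G}_{m,n,s,t}$. Suppose $1\le\ell=\ell(n)\le c\cdot\frac{\log m}{\log(ts)}$ for a small enough universal constant $c>0$. Then, with high probability: (1) there exists $v^*\in V_L$ such that $\mathsf{B}_{G^*}(v^*,2\ell+1)$ does not contain a cycle; (2) $G^*$ is bicycle-free at radius $2\ell+1$.
   Context: $\mathcal{G}_{m,n,s,t}$ is the set of bipartite graphs with left vertex set $V_L$ of size $n$, every left vertex of degree $t$, and right vertex set $V_R$ of size $m$, every right vertex of degree $s$. For a vertex $v$ and $\ell\in\mathbb{N}$, $\mathsf{B}_G(v,\ell)$ is the subgraph induced on vertices at distance at most $\ell$ from $v$. $G$ is bicycle-free at radius $\ell$ if for every vertex $v$, $\mathsf{B}_G(v,\ell)$ contains at most one cycle. "With high probability" means with probability tending to $1$ as $n\to\infty$. *)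

theory Defs
  imports "HOL-Probability.Probability"
begin

text \<open>Bipartite graphs with left vertices Inl i (i < n) and right vertices Inr j (j < m),
  given by their edge relation E \<subseteq> {..<n} \<times> {..<m}.\<close>

definition biregular_graphs :: "nat \<Rightarrow> nat \<Rightarrow> nat \<Rightarrow> nat \<Rightarrow> (nat \<times> nat) set set" where
  "biregular_graphs m n s t =
     {E. E \<subseteq> {..<n} \<times> {..<m}
         \<and> (\<forall>i<n. card {j. (i, j) \<in> E} = t)
         \<and> (\<forall>j<m. card {i. (i, j) \<in> E} = s)}"

definition bip_edges :: "(nat \<times> nat) set \<Rightarrow> (nat + nat) set set" where
  "bip_edges E = {{Inl i, Inr j} | i j. (i, j) \<in> E}"

definition adj_rel :: "'v set set \<Rightarrow> ('v \<times> 'v) set" where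
  "adj_rel F = {(x, y). {x, y} \<in> F \<and> x \<noteq> y}"

definition ball_verts :: "'v set set \<Rightarrow> 'v \<Rightarrow> nat \<Rightarrow> 'v set" where
  "ball_verts F v r = {w. \<exists>k\<le>r. (v, w) \<in> adj_rel F ^^ k}"

definition induced_edges :: "'v set set \<Rightarrow> 'v set \<Rightarrow> 'v set set" where
  "induced_edges F S = {e \<in> F. e \<subseteq> S}"

definition is_cycle :: "'v set set \<Rightarrow> 'v set set \<Rightarrow> bool" where
  "is_cycle F C \<longleftrightarrow> (\<exists>vs. length vs \<ge> 3 \<and> distinct vs
      \<and> (\<forall>i<length vs. {vs ! i, vs ! ((i + 1) mod length vs)} \<in> F)
      \<and> C = {{vs ! i, vs ! ((i + 1) mod length vs)} | i. i < length vs})"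

definition ball_graph :: "(nat \<times> nat) set \<Rightarrow> nat + nat \<Rightarrow> nat \<Rightarrow> (nat + nat) set set" where
  "ball_graph E v r = induced_edges (bip_edges E) (ball_verts (bip_edges E) v r)"

definition bicycle_free_at :: "nat \<Rightarrow> nat \<Rightarrow> (nat \<times> nat) set \<Rightarrow> nat \<Rightarrow> bool" where
  "bicycle_free_at n m E r \<longleftrightarrow>
     (\<forall>v \<in> Inl ` {..<n} \<union> Inr ` {..<m}.
        \<forall>C C'. is_cycle (ball_graph E v r) C \<longrightarrow> is_cycle (ball_graph E v r) C' \<longrightarrow> C = C')"

end

theory Submission
  imports Defs "HOL-Real_Asymp.Real_Asymp"
begin

lemma bg_sub: "E \<in> biregular_graphs m n s t \<Longrightarrow> E \<subseteq> {..<n} \<times> {..<m}"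
  by (simp add: biregular_graphs_def)
lemma bg_row: "E \<in> biregular_graphs m n s t \<Longrightarrow> i < n \<Longrightarrow> card {j. (i, j) \<in> E} = t"
  by (simp add: biregular_graphs_def)
lemma bg_col: "E \<in> biregular_graphs m n s t \<Longrightarrow> j < m \<Longrightarrow> card {i. (i, j) \<in> E} = s"
  by (simp add: biregular_graphs_def)

lemma bg_finite: "finite (biregular_graphs m n s t)"
proof -
  have "biregular_graphs m n s t \<subseteq> Pow ({..<n} \<times> {..<m})" by (auto simp: biregular_graphs_def)
  thus ?thesis by (rule finite_subset) auto
qed

lemma bg_card: assumes E: "E \<in> biregular_graphs m n s t" shows "card E = n * t"
proof -
  have eq: "E = Sigma {..<n} (\<lambda>i. {j. (i,j) \<in> E})" using bg_sub[OF E] by auto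
  have fin: "finite {j. (i,j) \<in> E}" for i
    by (rule finite_subset[of _ "{..<m}"]) (use bg_sub[OF E] in auto)
  have "card (Sigma {..<n} (\<lambda>i. {j. (i,j) \<in> E})) = (\<Sum>i<n. card {j. (i,j) \<in> E})"
    by (rule card_SigmaI) (auto simp: fin)
  hence "card E = (\<Sum>i<n. card {j. (i,j) \<in> E})" using eq by simp
  also have "\<dots> = (\<Sum>i<n. t)" using bg_row[OF E] by simp
  finally show ?thesis by simp
qed

definition sw :: "(nat\<times>nat) set \<Rightarrow> nat \<Rightarrow> nat \<Rightarrow> nat \<Rightarrow> nat \<Rightarrow> (nat\<times>nat) set" where
 "sw E i j a b = (E - {(i,j),(a,b)}) \<union> {(i,b),(a,j)}"

lemma card_ins_diff: "finite A \<Longrightarrow> x \<in> A \<Longrightarrow> y \<notin> A - {x} \<Longrightarrow> card (insert y (A - {x})) = card A"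
proof -
  assume a: "finite A" "x \<in> A" "y \<notin> A - {x}"
  hence "card (insert y (A - {x})) = Suc (card (A - {x}))" by simp
  also have "\<dots> = card A" using a by (metis card_Suc_Diff1)
  finally show ?thesis .
qed

lemma sw_in:
  assumes E: "E \<in> biregular_graphs m n s t" and ij: "(i,j)\<in>E" and ab: "(a,b)\<in>E"
    and ai: "a \<noteq> i" and bj: "b \<noteq> j" and ib: "(i,b)\<notin>E" and aj: "(a,j)\<notin>E"
  shows "sw E i j a b \<in> biregular_graphs m n s t"
proof -
  have sub: "E \<subseteq> {..<n} \<times> {..<m}" using bg_sub[OF E] .
  have fr: "finite {y. (x,y) \<in> E}" for x
    by (rule finite_subset[of _ "{..<m}"]) (use sub in auto)
  have fc: "finite {y. (y,x) \<in> E}" for x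
    by (rule finite_subset[of _ "{..<n}"]) (use sub in auto)
  have "sw E i j a b \<subseteq> {..<n} \<times> {..<m}" using sub ij ab by (auto simp: sw_def)
  moreover have "card {y. (x, y) \<in> sw E i j a b} = t" if x: "x < n" for x
  proof -
    consider "x = i" | "x = a" | "x \<noteq> i" "x \<noteq> a" by blast
    thus ?thesis
    proof cases
      case 1
      have "{y. (x, y) \<in> sw E i j a b} = insert b ({y. (i,y)\<in>E} - {j})"
        using 1 ai by (auto simp: sw_def)
      moreover have "card (insert b ({y. (i,y)\<in>E} - {j})) = card {y. (i,y)\<in>E}"
        by (rule card_ins_diff) (use fr ij ib in auto)
      moreover have "card {y. (i,y)\<in>E} = t"
        by (rule bg_row[OF E]) (use ij sub in auto)
      ultimately show ?thesis by simp
    next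
      case 2
      have "{y. (x, y) \<in> sw E i j a b} = insert j ({y. (a,y)\<in>E} - {b})"
        using 2 ai by (auto simp: sw_def)
      moreover have "card (insert j ({y. (a,y)\<in>E} - {b})) = card {y. (a,y)\<in>E}"
        by (rule card_ins_diff) (use fr ab aj in auto)
      moreover have "card {y. (a,y)\<in>E} = t"
        by (rule bg_row[OF E]) (use ab sub in auto)
      ultimately show ?thesis by simp
    next
      case 3
      have "{y. (x, y) \<in> sw E i j a b} = {y. (x,y)\<in>E}" using 3 by (auto simp: sw_def)
      thus ?thesis using bg_row[OF E x] by simp
    qed
  qed
  moreover have "card {y. (y, x) \<in> sw E i j a b} = s" if x: "x < m" for x
  proof -
    consider "x = j" | "x = b" | "x \<noteq> j" "x \<noteq> b" by blast
    thus ?thesis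
    proof cases
      case 1
      have "{y. (y, x) \<in> sw E i j a b} = insert a ({y. (y,j)\<in>E} - {i})"
        using 1 bj by (auto simp: sw_def)
      moreover have "card (insert a ({y. (y,j)\<in>E} - {i})) = card {y. (y,j)\<in>E}"
        by (rule card_ins_diff) (use fc ij aj in auto)
      moreover have "card {y. (y,j)\<in>E} = s"
        by (rule bg_col[OF E]) (use ij sub in auto)
      ultimately show ?thesis by simp
    next
      case 2
      have "{y. (y, x) \<in> sw E i j a b} = insert i ({y. (y,b)\<in>E} - {a})"
        using 2 bj by (auto simp: sw_def)
      moreover have "card (insert i ({y. (y,b)\<in>E} - {a})) = card {y. (y,b)\<in>E}"
        by (rule card_ins_diff) (use fc ab ib in auto)
      moreover have "card {y. (y,b)\<in>E} = s"
        by (rule bg_col[OF E]) (use ab sub in auto)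
      ultimately show ?thesis by simp
    next
      case 3
      have "{y. (y, x) \<in> sw E i j a b} = {y. (y,x)\<in>E}" using 3 by (auto simp: sw_def)
      thus ?thesis using bg_col[OF E x] by simp
    qed
  qed
  ultimately show ?thesis by (simp add: biregular_graphs_def)
qed


lemma bg_fin_row: "E \<in> biregular_graphs m n s t \<Longrightarrow> finite {y. (x,y) \<in> E}"
  by (rule finite_subset[of _ "{..<m}"]) (use bg_sub in blast)+
lemma bg_fin_col: "E \<in> biregular_graphs m n s t \<Longrightarrow> finite {y. (y,x) \<in> E}"
  by (rule finite_subset[of _ "{..<n}"]) (use bg_sub in blast)+
lemma bg_fin_E: "E \<in> biregular_graphs m n s t \<Longrightarrow> finite E"
  by (rule finite_subset[of _ "{..<n} \<times> {..<m}"]) (use bg_sub in blast)+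

definition swset :: "(nat\<times>nat) set \<Rightarrow> nat \<Rightarrow> nat \<Rightarrow> (nat\<times>nat) set \<Rightarrow> (nat\<times>nat) set" where
  "swset E i j H = {(a,b)\<in>E. a\<noteq>i \<and> b\<noteq>j \<and> (i,b)\<notin>E \<and> (a,j)\<notin>E \<and> (a,b)\<notin>H}"

lemma swset_card:
  assumes E: "E \<in> biregular_graphs m n s t" and ij: "(i,j) \<in> E" and H: "finite H" "card H \<le> h"
  shows "n * t - (t + s + 2 * t * s + h) \<le> card (swset E i j H)"
proof -
  have sub: "E \<subseteq> {..<n} \<times> {..<m}" using bg_sub[OF E] .
  have i: "i < n" and j: "j < m" using ij sub by auto
  define U1 where "U1 = {i} \<times> {y. (i,y)\<in>E}"
  define U2 where "U2 = {y. (y,j)\<in>E} \<times> {j}"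
  define U3 where "U3 = (\<lambda>(b,a). (a,b)) ` (SIGMA b:{y. (i,y)\<in>E}. {y. (y,b)\<in>E})"
  define U4 where "U4 = (SIGMA a:{y. (y,j)\<in>E}. {y. (a,y)\<in>E})"
  have "E - swset E i j H \<subseteq> U1 \<union> U2 \<union> U3 \<union> U4 \<union> H"
  proof
    fix x assume x: "x \<in> E - swset E i j H"
    obtain a b where ab: "x = (a,b)" by fastforce
    show "x \<in> U1 \<union> U2 \<union> U3 \<union> U4 \<union> H"
    proof (cases "a = i \<or> b = j \<or> (i,b) \<in> E \<or> (a,j)\<in>E")
      case True
      then consider "a = i" | "b = j" | "(i,b) \<in> E" | "(a,j)\<in>E" by blast
      thus ?thesis
      proof cases
        case 1 thus ?thesis using x ab by (simp add: U1_def)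
      next
        case 2 thus ?thesis using x ab by (simp add: U2_def)
      next
        case 3 hence "(b,a) \<in> (SIGMA b:{y. (i,y)\<in>E}. {y. (y,b)\<in>E})" using x ab by simp
        hence "x \<in> U3" unfolding U3_def ab by (rule rev_image_eqI) simp
        thus ?thesis by simp
      next
        case 4 thus ?thesis using x ab by (simp add: U4_def)
      qed
    next
      case False thus ?thesis using x ab by (auto simp: swset_def)
    qed
  qed
  have c1: "card U1 = t" unfolding U1_def using bg_row[OF E i] by (simp add: card_cartesian_product)
  have c2: "card U2 = s" unfolding U2_def using bg_col[OF E j] by (simp add: card_cartesian_product)
  have c3: "card U3 \<le> t * s"
  proof -
    have "card U3 \<le> card (SIGMA b:{y. (i,y)\<in>E}. {y. (y,b)\<in>E})" unfolding U3_def by (rule card_image_le) (auto intro!: finite_SigmaI bg_fin_row[OF E] bg_fin_col[OF E])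
    also have "\<dots> = (\<Sum>b\<in>{y. (i,y)\<in>E}. card {y. (y,b)\<in>E})"
      by (rule card_SigmaI) (auto intro!: bg_fin_row[OF E] bg_fin_col[OF E])
    also have "\<dots> = (\<Sum>b\<in>{y. (i,y)\<in>E}. s)"
      by (rule sum.cong) (use sub bg_col[OF E] in auto)
    also have "\<dots> = t * s" using bg_row[OF E i] by simp
    finally show ?thesis .
  qed
  have c4: "card U4 \<le> t * s"
  proof -
    have "card U4 = (\<Sum>a\<in>{y. (y,j)\<in>E}. card {y. (a,y)\<in>E})"
      unfolding U4_def by (rule card_SigmaI) (auto intro!: bg_fin_row[OF E] bg_fin_col[OF E])
    also have "\<dots> = (\<Sum>a\<in>{y. (y,j)\<in>E}. t)"
      by (rule sum.cong) (use sub bg_row[OF E] in auto)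
    also have "\<dots> = t * s" using bg_col[OF E j] by simp
    finally show ?thesis by simp
  qed
  have fU: "finite (U1 \<union> U2 \<union> U3 \<union> U4 \<union> H)"
    unfolding U1_def U2_def U3_def U4_def using H(1)
    by (auto intro!: finite_SigmaI bg_fin_row[OF E] bg_fin_col[OF E])
  have "card (E - swset E i j H) \<le> card (U1 \<union> U2 \<union> U3 \<union> U4 \<union> H)"
    by (rule card_mono[OF fU]) fact
  also have "\<dots> \<le> card U1 + card U2 + card U3 + card U4 + card H"
    by (meson add_mono card_Un_le le_trans order_refl)
  also have "\<dots> \<le> t + s + 2 * t * s + h" using c1 c2 c3 c4 H(2) by simp
  finally have x: "card (E - swset E i j H) \<le> t + s + 2 * t * s + h" .
  have "card E = n * t" using bg_card[OF E] .
  moreover have "card E \<le> card (swset E i j H) + card (E - swset E i j H)"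
  proof -
    have "swset E i j H \<subseteq> E" by (auto simp: swset_def)
    thus ?thesis using bg_fin_E[OF E]
      using card_Un_le[of "swset E i j H" "E - swset E i j H"] by (simp add: Un_absorb1)
  qed
  ultimately show ?thesis using x by linarith
qed


lemma sw_inv:
  assumes "(i,j)\<in>E" "(a,b)\<in>E" "(i,b)\<notin>E" "(a,j)\<notin>E"
  shows "E = (sw E i j a b - {(i,b),(a,j)}) \<union> {(i,j),(a,b)}"
  using assms by (auto simp: sw_def)

lemma switch_bound:
  assumes eH: "(i,j) \<notin> H" and H: "finite H" "card H \<le> h"
  shows "card {E\<in>biregular_graphs m n s t. insert (i,j) H \<subseteq> E} * (n * t - (t + s + 2 * t * s + h))
     \<le> t * s * card {E\<in>biregular_graphs m n s t. H \<subseteq> E}"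
proof -
  define G where "G = biregular_graphs m n s t"
  define A where "A = {E\<in>G. insert (i,j) H \<subseteq> E}"
  define B where "B = {E\<in>G. H \<subseteq> E \<and> (i,j) \<notin> E}"
  define S where "S = (SIGMA E:A. swset E i j H)"
  define T where "T = (SIGMA E':B. ({y. (y,j)\<in>E'} \<times> {y. (i,y) \<in> E'}))"
  define \<phi> where "\<phi> = (\<lambda>(E::(nat\<times>nat) set,(a::nat,b::nat)). (sw E i j a b, (a,b)))"
  have fG: "finite G" unfolding G_def by (rule bg_finite)
  have fA: "finite A" using fG unfolding A_def by simp
  have fB: "finite B" using fG unfolding B_def by simp
  have AG: "E \<in> G" if "E \<in> A" for E using that unfolding A_def by simp
  have BG: "E \<in> G" if "E \<in> B" for E using that unfolding B_def by simp
  have BG': "E \<in> biregular_graphs m n s t" if "E \<in> B" for E using BG[OF that] G_def by simp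
  have fsw: "finite (swset E i j H)" if "E \<in> A" for E
    by (rule finite_subset[OF _ bg_fin_E[OF AG[OF that, unfolded G_def]]]) (auto simp: swset_def)
  have "card A * (n * t - (t + s + 2 * t * s + h)) \<le> (\<Sum>E\<in>A. card (swset E i j H))"
  proof -
    have "\<And>E. E \<in> A \<Longrightarrow> n * t - (t + s + 2 * t * s + h) \<le> card (swset E i j H)"
      by (rule swset_card[OF _ _ H]) (auto simp: A_def G_def)
    thus ?thesis using sum_bounded_below[of A "n * t - (t + s + 2 * t * s + h)" "\<lambda>E. card (swset E i j H)"]
      by simp
  qed
  also have "\<dots> = card S" unfolding S_def by (rule card_SigmaI[symmetric]) (use fA fsw in auto)
  also have "card S \<le> card T"
  proof (rule card_inj_on_le)
    show "inj_on \<phi> S"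
    proof (rule inj_onI)
      fix x y assume x: "x \<in> S" and y: "y \<in> S" and eq: "\<phi> x = \<phi> y"
      obtain E a b where xe: "x = (E,(a,b))" by (metis prod.exhaust)
      obtain E2 a2 b2 where ye: "y = (E2,(a2,b2))" by (metis prod.exhaust)
      have ab: "a2 = a" "b2 = b" and sweq: "sw E i j a b = sw E2 i j a b"
        using eq unfolding xe ye \<phi>_def by auto
      have e1: "E = (sw E i j a b - {(i,b),(a,j)}) \<union> {(i,j),(a,b)}"
        by (rule sw_inv) (use x in \<open>auto simp: xe S_def A_def swset_def\<close>)
      have e2: "E2 = (sw E2 i j a b - {(i,b),(a,j)}) \<union> {(i,j),(a,b)}"
        by (rule sw_inv) (use y in \<open>auto simp: ye ab S_def A_def swset_def\<close>)
      show "x = y" using e1 e2 sweq xe ye ab by simp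
    qed
  next
    show "\<phi> ` S \<subseteq> T"
    proof
      fix z assume "z \<in> \<phi> ` S"
      then obtain E a b where E: "E \<in> A" and ab: "(a,b) \<in> swset E i j H" and z: "z = (sw E i j a b, (a,b))"
        unfolding S_def \<phi>_def by auto
      have EG: "E \<in> biregular_graphs m n s t" using AG[OF E] G_def by simp
      have ij: "(i,j) \<in> E" and HE: "H \<subseteq> E" using E A_def by auto
      have abE: "(a,b)\<in>E" "a \<noteq> i" "b \<noteq> j" "(i,b)\<notin>E" "(a,j)\<notin>E" "(a,b) \<notin> H"
        using ab by (auto simp: swset_def)
      have "sw E i j a b \<in> G" unfolding G_def by (rule sw_in[OF EG ij abE(1-5)])
      moreover have "H \<subseteq> sw E i j a b" using HE eH abE by (auto simp: sw_def)
      moreover have "(i,j) \<notin> sw E i j a b" using abE by (auto simp: sw_def)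
      moreover have "(a,j) \<in> sw E i j a b" "(i,b) \<in> sw E i j a b" by (auto simp: sw_def)
      ultimately show "z \<in> T" unfolding T_def B_def z by simp
    qed
  next
    show "finite T" unfolding T_def
      by (auto intro!: finite_SigmaI finite_cartesian_product intro: bg_fin_row[OF BG'] bg_fin_col[OF BG'] simp: fB)
  qed
  also have "card T = (\<Sum>E'\<in>B. card ({y. (y,j)\<in>E'} \<times> {y. (i,y) \<in> E'}))"
    unfolding T_def by (rule card_SigmaI) (auto intro!: finite_cartesian_product intro: bg_fin_row[OF BG'] bg_fin_col[OF BG'] simp: fB)
  also have "\<dots> \<le> (\<Sum>E'\<in>B. t * s)"
  proof (rule sum_mono)
    fix E' assume E': "E' \<in> B"
    hence EG: "E' \<in> biregular_graphs m n s t" using BG G_def by simp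
    show "card ({y. (y,j)\<in>E'} \<times> {y. (i,y) \<in> E'}) \<le> t * s"
    proof (cases "i < n \<and> j < m")
      case True
      thus ?thesis using bg_row[OF EG, of i] bg_col[OF EG, of j] by (simp add: card_cartesian_product)
    next
      case False
      hence "{y. (y,j)\<in>E'} = {} \<or> {y. (i,y) \<in> E'} = {}" using bg_sub[OF EG] by auto
      thus ?thesis by auto
    qed
  qed
  also have "\<dots> = t * s * card B" by simp
  also have "\<dots> \<le> t * s * card {E\<in>G. H \<subseteq> E}"
    by (rule mult_left_mono) (auto intro!: card_mono simp: B_def fG)
  finally show ?thesis unfolding A_def G_def .
qed


lemma contain_bound:
  assumes "finite H" "card H \<le> h" and X0: "0 < n * t - (t + s + 2 * t * s + h)"
  shows "real (card {E\<in>biregular_graphs m n s t. H \<subseteq> E})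
     \<le> (real (t * s) / real (n * t - (t + s + 2 * t * s + h))) ^ card H * real (card (biregular_graphs m n s t))"
  using assms(1,2)
proof (induction H rule: finite_induct)
  case empty
  thus ?case by simp
next
  case (insert x F)
  obtain i j where x: "x = (i,j)" by fastforce
  define X where "X = n * t - (t + s + 2 * t * s + h)"
  define q where "q = real (t * s) / real X"
  have cF: "card F \<le> h" using insert by simp
  have IH: "real (card {E\<in>biregular_graphs m n s t. F \<subseteq> E}) \<le> q ^ card F * real (card (biregular_graphs m n s t))"
    using insert.IH[OF cF] unfolding q_def X_def .
  have sb: "card {E\<in>biregular_graphs m n s t. insert (i,j) F \<subseteq> E} * X \<le> t * s * card {E\<in>biregular_graphs m n s t. F \<subseteq> E}"
    unfolding X_def by (rule switch_bound) (use insert x cF in auto)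
  have Xp: "0 < real X" using X0 unfolding X_def by (simp only: of_nat_0_less_iff)
  define cA where "cA = card {E\<in>biregular_graphs m n s t. insert x F \<subseteq> E}"
  define cB where "cB = card {E\<in>biregular_graphs m n s t. F \<subseteq> E}"
  have "real (cA * X) \<le> real (t * s * cB)" using sb x unfolding cA_def cB_def by (simp only: of_nat_le_iff)
  hence "real cA * real X \<le> real (t * s) * real cB" by (simp only: of_nat_mult)
  hence "real cA \<le> real (t * s) * real cB / real X" using Xp by (simp only: pos_le_divide_eq)
  also have "real (t * s) * real cB / real X = q * real cB" unfolding q_def by simp
  finally have "real (card {E\<in>biregular_graphs m n s t. insert x F \<subseteq> E}) \<le> q * real (card {E\<in>biregular_graphs m n s t. F \<subseteq> E})"
    unfolding cA_def cB_def .
  also have "\<dots> \<le> q * (q ^ card F * real (card (biregular_graphs m n s t)))"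
    by (rule mult_left_mono[OF IH]) (simp add: q_def)
  also have "\<dots> = q ^ card (insert x F) * real (card (biregular_graphs m n s t))"
    using insert by simp
  finally show ?case unfolding q_def X_def .
qed

definition RR :: "(nat\<times>nat) set \<Rightarrow> ((nat+nat)\<times>(nat+nat)) set" where
  "RR E = adj_rel (bip_edges E)"
definition reach :: "(nat\<times>nat) set \<Rightarrow> nat+nat \<Rightarrow> nat+nat \<Rightarrow> bool" where
  "reach E v w \<longleftrightarrow> (\<exists>k. (v,w) \<in> RR E ^^ k)"
definition gdist :: "(nat\<times>nat) set \<Rightarrow> nat+nat \<Rightarrow> nat+nat \<Rightarrow> nat" where
  "gdist E v w = (LEAST k. (v,w) \<in> RR E ^^ k)"

lemma RR_iff: "(x,y) \<in> RR E \<longleftrightarrow> (\<exists>i j. (i,j)\<in>E \<and> ((x = Inl i \<and> y = Inr j) \<or> (x = Inr j \<and> y = Inl i)))"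
proof
  assume "(x,y) \<in> RR E"
  then obtain i j where "{x,y} = {Inl i, Inr j}" "(i,j)\<in>E" "x \<noteq> y"
    by (auto simp: RR_def adj_rel_def bip_edges_def)
  thus "\<exists>i j. (i,j)\<in>E \<and> ((x = Inl i \<and> y = Inr j) \<or> (x = Inr j \<and> y = Inl i))"
    by (metis doubleton_eq_iff)
next
  assume "\<exists>i j. (i,j)\<in>E \<and> ((x = Inl i \<and> y = Inr j) \<or> (x = Inr j \<and> y = Inl i))"
  then obtain i j where "(i,j)\<in>E" "(x = Inl i \<and> y = Inr j) \<or> (x = Inr j \<and> y = Inl i)" by blast
  thus "(x,y) \<in> RR E"
    by (auto simp: RR_def adj_rel_def bip_edges_def insert_commute)
qed

lemma RR_sym: "(x,y) \<in> RR E \<Longrightarrow> (y,x) \<in> RR E"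
  by (auto simp: RR_iff)

lemma RR_side: "(x,y) \<in> RR E \<Longrightarrow> isl x \<noteq> isl y"
  by (auto simp: RR_iff)

lemma relpow_side: "(a,b) \<in> RR E ^^ k \<Longrightarrow> (isl a = isl b) = even k"
proof (induction k arbitrary: b)
  case 0 thus ?case by simp
next
  case (Suc k)
  then obtain y where "(a,y) \<in> RR E ^^ k" "(y,b) \<in> RR E" by (meson relpow_Suc_E)
  thus ?case using Suc.IH RR_side by fastforce
qed

lemma dist_le: "(v,w) \<in> RR E ^^ k \<Longrightarrow> gdist E v w \<le> k"
  unfolding gdist_def by (rule Least_le)

lemma dist_path: "reach E v w \<Longrightarrow> (v,w) \<in> RR E ^^ gdist E v w"
  unfolding gdist_def reach_def by (rule LeastI_ex)

lemma reach_step: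
  assumes "reach E v w" "(w,x) \<in> RR E"
  shows "reach E v x" "gdist E v x \<le> Suc (gdist E v w)"
proof -
  have "(v,x) \<in> RR E ^^ Suc (gdist E v w)" using dist_path[OF assms(1)] assms(2) by auto
  thus "reach E v x" "gdist E v x \<le> Suc (gdist E v w)" using dist_le reach_def by blast+
qed

lemma adj_dist:
  assumes "reach E v w" "(w,x) \<in> RR E"
  shows "gdist E v x = Suc (gdist E v w) \<or> gdist E v w = Suc (gdist E v x)"
proof -
  have rx: "reach E v x" and d1: "gdist E v x \<le> Suc (gdist E v w)" using reach_step[OF assms] by auto
  have d2: "gdist E v w \<le> Suc (gdist E v x)" using reach_step[OF rx RR_sym[OF assms(2)]] by auto
  have "(isl v = isl w) = even (gdist E v w)" by (rule relpow_side[OF dist_path[OF assms(1)]])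
  moreover have "(isl v = isl x) = even (gdist E v x)" by (rule relpow_side[OF dist_path[OF rx]])
  moreover have "isl w \<noteq> isl x" by (rule RR_side[OF assms(2)])
  ultimately have "gdist E v w \<noteq> gdist E v x" by auto
  thus ?thesis using d1 d2 by linarith
qed

lemma dist0: "reach E v w \<Longrightarrow> gdist E v w = 0 \<Longrightarrow> w = v"
  using dist_path by fastforce

lemma reach_refl: "reach E v v" and dist_refl: "gdist E v v = 0"
proof -
  show "reach E v v" unfolding reach_def by (rule exI[of _ 0]) simp
  have "(v,v) \<in> RR E ^^ 0" by simp
  from dist_le[OF this] show "gdist E v v = 0" by simp
qed

definition preds :: "(nat\<times>nat) set \<Rightarrow> nat+nat \<Rightarrow> nat+nat \<Rightarrow> (nat+nat) set" where
  "preds E v w = {x. (x,w) \<in> RR E \<and> reach E v x \<and> Suc (gdist E v x) = gdist E v w}"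

definition par :: "(nat\<times>nat) set \<Rightarrow> nat+nat \<Rightarrow> nat+nat \<Rightarrow> nat+nat" where
  "par E v w = (SOME x. x \<in> preds E v w)"

lemma preds_ne:
  assumes "reach E v w" "0 < gdist E v w"
  shows "preds E v w \<noteq> {}"
proof -
  obtain k where k: "gdist E v w = Suc k" using assms(2) by (metis gr0_implies_Suc)
  have "(v,w) \<in> RR E ^^ Suc k" using dist_path[OF assms(1)] k by simp
  then obtain y where y: "(v,y) \<in> RR E ^^ k" "(y,w) \<in> RR E" by (meson relpow_Suc_E)
  have ry: "reach E v y" using y reach_def by blast
  have "gdist E v y \<le> k" using dist_le[OF y(1)] .
  hence "Suc (gdist E v y) = gdist E v w" using adj_dist[OF ry y(2)] k by linarith
  thus ?thesis using y ry unfolding preds_def by blast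
qed

lemma par_in: "reach E v w \<Longrightarrow> 0 < gdist E v w \<Longrightarrow> par E v w \<in> preds E v w"
  unfolding par_def using preds_ne by (metis some_in_eq)

lemma ball_verts_eq: "ball_verts (bip_edges E) v r = {w. reach E v w \<and> gdist E v w \<le> r}"
proof -
  have "w \<in> ball_verts (bip_edges E) v r \<longleftrightarrow> reach E v w \<and> gdist E v w \<le> r" for w
  proof
    assume "w \<in> ball_verts (bip_edges E) v r"
    then obtain k where "k \<le> r" "(v,w) \<in> RR E ^^ k" by (auto simp: ball_verts_def RR_def)
    thus "reach E v w \<and> gdist E v w \<le> r" using dist_le reach_def by fastforce
  next
    assume "reach E v w \<and> gdist E v w \<le> r"
    thus "w \<in> ball_verts (bip_edges E) v r" using dist_path unfolding ball_verts_def RR_def by blast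
  qed
  thus ?thesis by blast
qed

definition ExtraE :: "(nat\<times>nat) set \<Rightarrow> nat+nat \<Rightarrow> nat \<Rightarrow> (nat+nat) set set" where
  "ExtraE E v r = {{y,x} | y x. reach E v y \<and> gdist E v y \<le> r \<and> x \<in> preds E v y \<and> x \<noteq> par E v y}"

lemma edge_other:
  assumes "f \<in> bip_edges E" "z \<in> f"
  shows "\<exists>x. f = {z,x} \<and> (x,z) \<in> RR E"
proof -
  obtain i j where f: "f = {Inl i, Inr j}" "(i,j) \<in> E" using assms(1) by (auto simp: bip_edges_def)
  show ?thesis
  proof (cases "z = Inl i")
    case True thus ?thesis using f by (auto simp: RR_iff)
  next
    case False hence "z = Inr j" using f assms(2) by auto
    thus ?thesis using f by (auto simp: RR_iff insert_commute)
  qed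
qed

lemma ball_graph_iff: "f \<in> ball_graph E v r \<longleftrightarrow> f \<in> bip_edges E \<and> (\<forall>w\<in>f. reach E v w \<and> gdist E v w \<le> r)"
  by (auto simp: ball_graph_def induced_edges_def ball_verts_eq)

lemma bip_edges_finite: "f \<in> bip_edges E \<Longrightarrow> finite f"
  by (auto simp: bip_edges_def)

lemma card_ge2_two: "finite A \<Longrightarrow> 2 \<le> card A \<Longrightarrow> \<exists>x y. x \<in> A \<and> y \<in> A \<and> x \<noteq> y"
  by (metis One_nat_def card.empty card_Suc_eq card_le_Suc0_iff_eq not_less_eq_eq numeral_2_eq_2 zero_le)

lemma even_set_meets_Ex:
  assumes F: "F \<subseteq> ball_graph E v r" "finite F" "F \<noteq> {}"
    and ev: "\<And>z. even (card {f\<in>F. z \<in> f})"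
  shows "F \<inter> ExtraE E v r \<noteq> {}"
proof -
  define U where "U = \<Union>F"
  have Fb: "f \<in> bip_edges E" if "f \<in> F" for f using F(1) that ball_graph_iff by blast
  have fU: "finite U" unfolding U_def using F(2) Fb bip_edges_finite by blast
  have Une: "U \<noteq> {}"
  proof -
    obtain f where "f \<in> F" using F(3) by blast
    then obtain i j where "f = {Inl i, Inr j}" using Fb unfolding bip_edges_def by blast
    thus ?thesis using \<open>f \<in> F\<close> unfolding U_def by blast
  qed
  define M where "M = Max (gdist E v ` U)"
  have "M \<in> gdist E v ` U" unfolding M_def using fU Une by (intro Max_in) auto
  then obtain z where zU: "z \<in> U" and zM: "gdist E v z = M" by auto
  have uM: "gdist E v u \<le> gdist E v z" if "u \<in> U" for u
    using that fU zM unfolding M_def by simp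
  have inball: "reach E v w \<and> gdist E v w \<le> r" if "w \<in> U" for w
    using that F(1) unfolding U_def by (auto simp: ball_graph_iff)
  define Fz where "Fz = {f\<in>F. z \<in> f}"
  have fFz: "finite Fz" using F(2) Fz_def by simp
  have "Fz \<noteq> {}" using zU unfolding Fz_def U_def by auto
  hence "0 < card Fz" using fFz by auto
  moreover have "even (card Fz)" using ev Fz_def by simp
  ultimately have "2 \<le> card Fz" by presburger
  then obtain f1 f2 where f12: "f1 \<in> Fz" "f2 \<in> Fz" "f1 \<noteq> f2" using card_ge2_two[OF fFz] by blast
  have key: "\<exists>x. f = {z,x} \<and> x \<in> preds E v z" if "f \<in> Fz" for f
  proof -
    have fF: "f \<in> F" "z \<in> f" using that Fz_def by auto
    obtain x where x: "f = {z,x}" "(x,z) \<in> RR E" using edge_other[OF Fb[OF fF(1)] fF(2)] by blast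
    have xU: "x \<in> U" using fF x unfolding U_def by auto
    have rz: "reach E v z" using inball[OF zU] by simp
    have rx: "reach E v x" using inball[OF xU] by simp
    have "gdist E v x \<le> gdist E v z" using uM[OF xU] .
    hence "Suc (gdist E v x) = gdist E v z" using adj_dist[OF rz RR_sym[OF x(2)]] by linarith
    thus ?thesis using x rx unfolding preds_def by blast
  qed
  obtain x1 where x1: "f1 = {z,x1}" "x1 \<in> preds E v z" using key f12 by blast
  obtain x2 where x2: "f2 = {z,x2}" "x2 \<in> preds E v z" using key f12 by blast
  have "x1 \<noteq> x2" using x1 x2 f12 by auto
  then obtain f x where fx: "f \<in> Fz" "f = {z,x}" "x \<in> preds E v z" "x \<noteq> par E v z"
    using x1 x2 f12 by metis
  have "f \<in> ExtraE E v r" unfolding ExtraE_def using fx inball[OF zU] by blast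
  thus ?thesis using fx Fz_def by blast
qed


lemma cycle_props:
  assumes "is_cycle F C"
  shows "C \<subseteq> F" "finite C" "C \<noteq> {}" "\<And>z. even (card {f\<in>C. z\<in>f})"
proof -
  obtain vs where l3: "length vs \<ge> 3" and dv: "distinct vs"
    and inF: "\<forall>i<length vs. {vs ! i, vs ! ((i + 1) mod length vs)} \<in> F"
    and C: "C = {{vs ! i, vs ! ((i + 1) mod length vs)} | i. i < length vs}"
    using assms unfolding is_cycle_def by blast
  define l where "l = length vs"
  define e where "e i = {vs ! i, vs ! ((i + 1) mod l)}" for i
  have C': "C = e ` {..<l}" unfolding C e_def l_def by auto
  show "C \<subseteq> F" using inF unfolding C by auto
  show "finite C" unfolding C' by simp
  show "C \<noteq> {}" unfolding C' using l3 l_def by (metis image_is_empty lessThan_empty_iff not_numeral_le_zero)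
  fix z
  show "even (card {f\<in>C. z\<in>f})"
  proof (cases "z \<in> set vs")
    case False
    have "{f\<in>C. z\<in>f} = {}"
    proof (rule ccontr)
      assume "{f\<in>C. z\<in>f} \<noteq> {}"
      then obtain i where i: "i < l" "z \<in> e i" unfolding C' by auto
      have "0 < l" using l3 l_def by linarith
      hence "(i + 1) mod l < l" by simp
      hence "vs ! i \<in> set vs" "vs ! ((i + 1) mod l) \<in> set vs" using i(1) l_def by auto
      thus False using i(2) False unfolding e_def by auto
    qed
    hence "card {f\<in>C. z\<in>f} = 0" by (simp only: card.empty)
    thus ?thesis by simp
  next
    case True
    then obtain k where k: "k < l" "z = vs ! k" unfolding l_def by (auto simp: set_conv_nth)
    define p where "p = (if k = 0 then l - 1 else k - 1)"
    define nk where "nk = (if k + 1 = l then 0 else k + 1)"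
    have l3': "l \<ge> 3" using l3 l_def by simp
    have pl: "p < l" "(p + 1) mod l = k" "p \<noteq> k" using k l3' unfolding p_def by auto
    have nkl: "nk < l" "(k + 1) mod l = nk" "nk \<noteq> p" using k l3' unfolding p_def nk_def by auto
    have pre: "i = p" if "i < l" "(i + 1) mod l = k" for i
    proof (cases "i + 1 = l")
      case True thus ?thesis using that unfolding p_def by auto
    next
      case False hence "(i+1) mod l = i + 1" using that by simp
      thus ?thesis using that unfolding p_def by auto
    qed
    have nth_inj: "vs ! a = vs ! b \<longleftrightarrow> a = b" if "a < l" "b < l" for a b
      using dv that nth_eq_iff_index_eq l_def by blast
    have "{f\<in>C. z\<in>f} = {e p, e k}"
    proof
      show "{e p, e k} \<subseteq> {f\<in>C. z\<in>f}" unfolding C' e_def using pl k by auto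
    next
      show "{f\<in>C. z\<in>f} \<subseteq> {e p, e k}"
      proof
        fix f assume "f \<in> {f\<in>C. z\<in>f}"
        then obtain i where i: "i < l" "f = e i" "z \<in> e i" unfolding C' by auto
        have "(i+1) mod l < l" using i(1) by simp
        hence "i = k \<or> (i + 1) mod l = k" using i(3) k nth_inj i(1) unfolding e_def by auto
        thus "f \<in> {e p, e k}" using pre i by auto
      qed
    qed
    moreover have "e p \<noteq> e k"
    proof
      assume "e p = e k"
      hence "{vs ! p, vs ! k} = {vs ! k, vs ! nk}" unfolding e_def using pl nkl by simp
      moreover have "vs ! p \<noteq> vs ! k" using nth_inj pl k by simp
      ultimately have "vs ! p = vs ! nk" by (metis doubleton_eq_iff)
      thus False using nth_inj pl nkl by simp
    qed
    ultimately show ?thesis by simp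
  qed
qed

lemma card_symdiff: "finite A \<Longrightarrow> finite B \<Longrightarrow> card ((A - B) \<union> (B - A)) + 2 * card (A \<inter> B) = card A + card B"
proof -
  assume f: "finite A" "finite B"
  have "card ((A - B) \<union> (B - A)) = card (A - B) + card (B - A)"
    by (rule card_Un_disjoint) (use f in auto)
  moreover have "card (A - B) + card (A \<inter> B) = card A"
  proof -
    have "A = (A - B) \<union> (A \<inter> B)" by blast
    hence "card A = card ((A - B) \<union> (A \<inter> B))" by simp
    also have "\<dots> = card (A - B) + card (A \<inter> B)" by (rule card_Un_disjoint) (use f in auto)
    finally show ?thesis by simp
  qed
  moreover have "card (B - A) + card (A \<inter> B) = card B"
  proof -
    have "B = (B - A) \<union> (A \<inter> B)" by blast
    hence "card B = card ((B - A) \<union> (A \<inter> B))" by simp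
    also have "\<dots> = card (B - A) + card (A \<inter> B)" by (rule card_Un_disjoint) (use f in auto)
    finally show ?thesis by simp
  qed
  ultimately show ?thesis by simp
qed

lemma cycle_Ex: assumes "is_cycle (ball_graph E v r) C" shows "C \<inter> ExtraE E v r \<noteq> {}"
  by (rule even_set_meets_Ex[OF cycle_props(1-3)[OF assms] cycle_props(4)[OF assms]])

lemma two_cycles_Ex:
  assumes C: "is_cycle (ball_graph E v r) C" and C': "is_cycle (ball_graph E v r) C'" and ne: "C \<noteq> C'"
  shows "\<exists>e1 e2. e1 \<in> ExtraE E v r \<and> e2 \<in> ExtraE E v r \<and> e1 \<noteq> e2"
proof (rule ccontr)
  assume "\<not> ?thesis"
  hence one: "e1 = e2" if "e1 \<in> ExtraE E v r" "e2 \<in> ExtraE E v r" for e1 e2 using that by blast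
  obtain e0 where e0: "e0 \<in> C" "e0 \<in> ExtraE E v r" using cycle_Ex[OF C] by blast
  obtain e0' where e0': "e0' \<in> C'" "e0' \<in> ExtraE E v r" using cycle_Ex[OF C'] by blast
  have "e0' = e0" using one e0 e0' by blast
  define D where "D = (C - C') \<union> (C' - C)"
  have fC: "finite C" "finite C'" using cycle_props C C' by blast+
  have "D \<subseteq> ball_graph E v r" unfolding D_def using cycle_props(1)[OF C] cycle_props(1)[OF C'] by blast
  moreover have "finite D" unfolding D_def using fC by simp
  moreover have "D \<noteq> {}" unfolding D_def using ne by blast
  moreover have "even (card {f\<in>D. z\<in>f})" for z
  proof -
    have eq: "{f\<in>D. z\<in>f} = ({f\<in>C. z\<in>f} - {f\<in>C'. z\<in>f}) \<union> ({f\<in>C'. z\<in>f} - {f\<in>C. z\<in>f})"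
      unfolding D_def by blast
    have "card {f\<in>D. z\<in>f} + 2 * card ({f\<in>C. z\<in>f} \<inter> {f\<in>C'. z\<in>f}) = card {f\<in>C. z\<in>f} + card {f\<in>C'. z\<in>f}"
      unfolding eq by (rule card_symdiff) (use fC in auto)
    moreover have "even (card {f\<in>C. z\<in>f})" "even (card {f\<in>C'. z\<in>f})"
      using cycle_props(4)[OF C] cycle_props(4)[OF C'] by blast+
    ultimately show ?thesis by presburger
  qed
  ultimately obtain e where e: "e \<in> D" "e \<in> ExtraE E v r" using even_set_meets_Ex by blast
  have "e = e0" using one e e0 by blast
  thus False using e e0 e0' \<open>e0' = e0\<close> unfolding D_def by blast
qed

definition VV :: "nat \<Rightarrow> nat \<Rightarrow> (nat+nat) set" where
  "VV n m = Inl ` {..<n} \<union> Inr ` {..<m}"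

lemma VV_finite: "finite (VV n m)" by (simp add: VV_def)
lemma VV_card: "card (VV n m) = n + m"
  unfolding VV_def by (subst card_Un_disjoint) (auto simp: card_image)

lemma RR_VV: "E \<subseteq> {..<n} \<times> {..<m} \<Longrightarrow> (a,b) \<in> RR E \<Longrightarrow> b \<in> VV n m"
  by (auto simp: RR_iff VV_def)

lemma relpow_VV: "E \<subseteq> {..<n} \<times> {..<m} \<Longrightarrow> a \<in> VV n m \<Longrightarrow> (a,b) \<in> RR E ^^ k \<Longrightarrow> b \<in> VV n m"
proof (induction k arbitrary: b)
  case 0 thus ?case by simp
next
  case (Suc k)
  then obtain y where "(a,y) \<in> RR E ^^ k" "(y,b) \<in> RR E" by (meson relpow_Suc_E)
  thus ?case using RR_VV Suc by blast
qed

lemma reach_VV: "E \<subseteq> {..<n} \<times> {..<m} \<Longrightarrow> v \<in> VV n m \<Longrightarrow> reach E v w \<Longrightarrow> w \<in> VV n m"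
  unfolding reach_def using relpow_VV by blast

definition anc :: "(nat\<times>nat) set \<Rightarrow> nat+nat \<Rightarrow> nat+nat \<Rightarrow> (nat+nat) set" where
  "anc E v a = (\<lambda>i. (par E v ^^ i) a) ` {..gdist E v a}"

lemma par_iter:
  assumes "reach E v a" "i \<le> gdist E v a"
  shows "reach E v ((par E v ^^ i) a) \<and> gdist E v ((par E v ^^ i) a) = gdist E v a - i"
  using assms(2)
proof (induction i)
  case 0 thus ?case using assms(1) by simp
next
  case (Suc i)
  hence IH: "reach E v ((par E v ^^ i) a)" "gdist E v ((par E v ^^ i) a) = gdist E v a - i" by auto
  have pos: "0 < gdist E v ((par E v ^^ i) a)" using IH Suc.prems by simp
  have "par E v ((par E v ^^ i) a) \<in> preds E v ((par E v ^^ i) a)" by (rule par_in[OF IH(1) pos])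
  thus ?case using IH Suc.prems by (auto simp: preds_def)
qed

lemma anc_props:
  assumes a: "reach E v a"
  shows "v \<in> anc E v a" "a \<in> anc E v a" "finite (anc E v a)" "card (anc E v a) \<le> Suc (gdist E v a)"
    "\<And>w. w \<in> anc E v a \<Longrightarrow> reach E v w \<and> gdist E v w \<le> gdist E v a"
    "\<And>w. w \<in> anc E v a \<Longrightarrow> w \<noteq> v \<Longrightarrow> par E v w \<in> anc E v a"
proof -
  have "reach E v ((par E v ^^ gdist E v a) a)" "gdist E v ((par E v ^^ gdist E v a) a) = 0"
    using par_iter[OF a, of "gdist E v a"] by auto
  hence "(par E v ^^ gdist E v a) a = v" using dist0 by blast
  thus "v \<in> anc E v a" unfolding anc_def by (metis atMost_iff image_eqI order_refl)
  show "a \<in> anc E v a" unfolding anc_def by (rule image_eqI[of _ _ 0]) auto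
  show "finite (anc E v a)" unfolding anc_def by simp
  show "card (anc E v a) \<le> Suc (gdist E v a)" unfolding anc_def
    using card_image_le[of "{..gdist E v a}" "\<lambda>i. (par E v ^^ i) a"] by simp
  show "reach E v w \<and> gdist E v w \<le> gdist E v a" if "w \<in> anc E v a" for w
    using that par_iter[OF a] unfolding anc_def by auto
  show "par E v w \<in> anc E v a" if wa: "w \<in> anc E v a" "w \<noteq> v" for w
  proof -
    obtain i where i: "i \<le> gdist E v a" "w = (par E v ^^ i) a" using wa(1) unfolding anc_def by auto
    have rw: "reach E v w" "gdist E v w = gdist E v a - i" using par_iter[OF a i(1)] i(2) by auto
    have "gdist E v w \<noteq> 0" using dist0[OF rw(1)] wa(2) by blast
    hence "Suc i \<le> gdist E v a" using rw by simp
    moreover have "par E v w = (par E v ^^ Suc i) a" using i by simp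
    ultimately show ?thesis unfolding anc_def by blast
  qed
qed

definition Hs :: "nat+nat \<Rightarrow> nat \<Rightarrow> (nat+nat) set \<Rightarrow> (nat+nat \<Rightarrow> nat+nat) \<Rightarrow> (nat \<Rightarrow> (nat+nat)\<times>(nat+nat)) \<Rightarrow> (nat+nat) set set" where
  "Hs v e W f g = (\<lambda>w. {w, f w}) ` (W - {v}) \<union> (\<lambda>k. {fst (g k), snd (g k)}) ` {..<e}"

definition XX :: "nat \<Rightarrow> nat \<Rightarrow> nat+nat \<Rightarrow> nat \<Rightarrow> nat \<Rightarrow> ((nat+nat) set \<times> (nat+nat \<Rightarrow> nat+nat) \<times> (nat \<Rightarrow> (nat+nat)\<times>(nat+nat))) set" where
  "XX n m v e p = {(W,f,g). v \<in> W \<and> W \<subseteq> VV n m \<and> card W = p \<and> f \<in> (W - {v}) \<rightarrow>\<^sub>E W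
      \<and> g \<in> {..<e} \<rightarrow>\<^sub>E W \<times> W \<and> card (Hs v e W f g) = p - 1 + e}"

lemma XX_card:
  assumes v: "v \<in> VV n m" and p: "1 \<le> p"
  shows "card (XX n m v e p) \<le> ((n + m - 1) choose (p - 1)) * p ^ (p - 1) * (p * p) ^ e"
proof -
  define Ws where "Ws = {W. v \<in> W \<and> W \<subseteq> VV n m \<and> card W = p}"
  have sub: "XX n m v e p \<subseteq> (SIGMA W:Ws. ((W - {v}) \<rightarrow>\<^sub>E W) \<times> ({..<e} \<rightarrow>\<^sub>E W \<times> W))"
    unfolding XX_def Ws_def by auto
  have fWs: "finite Ws" unfolding Ws_def
    by (rule finite_subset[of _ "Pow (VV n m)"]) (auto simp: VV_finite)
  have fW: "finite W" if "W \<in> Ws" for W using that VV_finite unfolding Ws_def by (auto intro: finite_subset)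
  have cW: "card W = p" if "W \<in> Ws" for W using that unfolding Ws_def by auto
  have vW: "v \<in> W" if "W \<in> Ws" for W using that unfolding Ws_def by auto
  have fin: "finite (SIGMA W:Ws. ((W - {v}) \<rightarrow>\<^sub>E W) \<times> ({..<e} \<rightarrow>\<^sub>E W \<times> W))"
    using fWs fW by (auto intro!: finite_SigmaI finite_PiE)
  have "card (XX n m v e p) \<le> card (SIGMA W:Ws. ((W - {v}) \<rightarrow>\<^sub>E W) \<times> ({..<e} \<rightarrow>\<^sub>E W \<times> W))"
    by (rule card_mono[OF fin sub])
  also have "\<dots> = (\<Sum>W\<in>Ws. card (((W - {v}) \<rightarrow>\<^sub>E W) \<times> ({..<e} \<rightarrow>\<^sub>E W \<times> W)))"
    using fWs fW by (intro card_SigmaI) (auto intro!: finite_PiE)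
  also have "\<dots> = (\<Sum>W\<in>Ws. p ^ (p - 1) * (p * p) ^ e)"
  proof (rule sum.cong[OF refl])
    fix W assume W: "W \<in> Ws"
    have "card ((W - {v}) \<rightarrow>\<^sub>E W) = p ^ (p - 1)"
      using fW[OF W] cW[OF W] vW[OF W] by (simp add: card_PiE)
    moreover have "card ({..<e} \<rightarrow>\<^sub>E W \<times> W) = (p * p) ^ e"
      using fW[OF W] cW[OF W] by (simp add: card_PiE card_cartesian_product)
    ultimately show "card (((W - {v}) \<rightarrow>\<^sub>E W) \<times> ({..<e} \<rightarrow>\<^sub>E W \<times> W)) = p ^ (p - 1) * (p * p) ^ e"
      by (simp add: card_cartesian_product)
  qed
  also have "\<dots> = card Ws * (p ^ (p - 1) * (p * p) ^ e)" by simp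
  also have "card Ws = (n + m - 1) choose (p - 1)"
  proof -
    have "bij_betw (\<lambda>W. W - {v}) Ws {B. B \<subseteq> VV n m - {v} \<and> card B = p - 1}"
    proof (rule bij_betwI[of _ _ _ "\<lambda>B. insert v B"])
      show "(\<lambda>W. W - {v}) \<in> Ws \<rightarrow> {B. B \<subseteq> VV n m - {v} \<and> card B = p - 1}"
      proof
        fix W assume W: "W \<in> Ws"
        have "W - {v} \<subseteq> VV n m - {v}" using W unfolding Ws_def by blast
        moreover have "card (W - {v}) = p - 1" using cW[OF W] vW[OF W] by (simp add: card_Diff_singleton)
        ultimately show "W - {v} \<in> {B. B \<subseteq> VV n m - {v} \<and> card B = p - 1}" by simp
      qed
      show "insert v \<in> {B. B \<subseteq> VV n m - {v} \<and> card B = p - 1} \<rightarrow> Ws"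
      proof
        fix B assume B: "B \<in> {B. B \<subseteq> VV n m - {v} \<and> card B = p - 1}"
        have "finite B" using B VV_finite by (auto intro: finite_subset)
        moreover have "v \<notin> B" using B by blast
        ultimately have "card (insert v B) = p" using B p by simp
        thus "insert v B \<in> Ws" using B v unfolding Ws_def by blast
      qed
      show "insert v (W - {v}) = W" if "W \<in> Ws" for W using vW[OF that] by auto
      show "insert v B - {v} = B" if "B \<in> {B. B \<subseteq> VV n m - {v} \<and> card B = p - 1}" for B
        using that by auto
    qed
    hence "card Ws = card {B. B \<subseteq> VV n m - {v} \<and> card B = p - 1}" by (rule bij_betw_same_card)
    also have "\<dots> = card (VV n m - {v}) choose (p - 1)" by (rule n_subsets) (simp add: VV_finite)
    also have "card (VV n m - {v}) = n + m - 1" using v VV_card VV_finite by (simp add: card_Diff_singleton)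
    finally show ?thesis .
  qed
  finally show ?thesis by (simp add: mult.assoc)
qed

lemma preds_edge: "x \<in> preds E v w \<Longrightarrow> {x, w} \<in> bip_edges E"
  by (auto simp: preds_def RR_def adj_rel_def)

lemma preds_dist: "x \<in> preds E v w \<Longrightarrow> Suc (gdist E v x) = gdist E v w"
  by (auto simp: preds_def)

lemma tree_edge:
  assumes "reach E v w" "w \<noteq> v"
  shows "par E v w \<in> preds E v w"
proof -
  have "gdist E v w \<noteq> 0" using dist0[OF assms(1)] assms(2) by blast
  thus ?thesis using par_in[OF assms(1)] by simp
qed

lemma extract_struct:
  assumes Esub: "E \<subseteq> {..<n} \<times> {..<m}" and v: "v \<in> VV n m" and e: "1 \<le> e"
    and ys: "\<And>k. k < e \<Longrightarrow> reach E v (fst (ys k)) \<and> gdist E v (fst (ys k)) \<le> r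
               \<and> snd (ys k) \<in> preds E v (fst (ys k)) \<and> snd (ys k) \<noteq> par E v (fst (ys k))"
    and inj: "inj_on (\<lambda>k. {fst (ys k), snd (ys k)}) {..<e}"
  shows "\<exists>p. 1 \<le> p \<and> p \<le> 2 * e * (r + 1) \<and>
           (\<exists>W f g. (W,f,g) \<in> XX n m v e p \<and> Hs v e W f g \<subseteq> bip_edges E)"
proof -
  define W where "W = (\<Union>k<e. anc E v (fst (ys k)) \<union> anc E v (snd (ys k)))"
  define f where "f = restrict (par E v) (W - {v})"
  define g where "g = restrict ys {..<e}"
  have ry: "reach E v (fst (ys k))" if "k < e" for k using ys[OF that] by blast
  have rx: "reach E v (snd (ys k))" if "k < e" for k using ys[OF that] by (auto simp: preds_def)
  have dy: "gdist E v (fst (ys k)) \<le> r" if "k < e" for k using ys[OF that] by blast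
  have dx: "gdist E v (snd (ys k)) \<le> r" if "k < e" for k
    using ys[OF that] preds_dist[of "snd (ys k)"] by fastforce
  have fW: "finite W" unfolding W_def using anc_props(3) ry rx by auto
  have wW: "reach E v w" if "w \<in> W" for w
    using that anc_props(5) ry rx unfolding W_def by blast
  have vW: "v \<in> W" unfolding W_def using anc_props(1)[OF ry[of 0]] e by auto
  have parW: "par E v w \<in> W" if "w \<in> W" "w \<noteq> v" for w
    using that anc_props(6) ry rx unfolding W_def by blast
  have WV: "W \<subseteq> VV n m" using wW reach_VV[OF Esub v] by blast
  have cW: "card W \<le> 2 * e * (r + 1)"
  proof -
    have "card W \<le> (\<Sum>k<e. card (anc E v (fst (ys k)) \<union> anc E v (snd (ys k))))"
      unfolding W_def by (rule card_UN_le) simp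
    also have "\<dots> \<le> (\<Sum>k<e. 2 * (r + 1))"
    proof (rule sum_mono)
      fix k assume "k \<in> {..<e}"
      hence k: "k < e" by simp
      have "card (anc E v (fst (ys k)) \<union> anc E v (snd (ys k))) \<le> card (anc E v (fst (ys k))) + card (anc E v (snd (ys k)))"
        by (rule card_Un_le)
      also have "\<dots> \<le> Suc (gdist E v (fst (ys k))) + Suc (gdist E v (snd (ys k)))"
        using anc_props(4)[OF ry[OF k]] anc_props(4)[OF rx[OF k]] by linarith
      also have "\<dots> \<le> 2 * (r + 1)" using dy[OF k] dx[OF k] by simp
      finally show "card (anc E v (fst (ys k)) \<union> anc E v (snd (ys k))) \<le> 2 * (r + 1)" .
    qed
    also have "\<dots> = 2 * e * (r + 1)" by simp
    finally show ?thesis .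
  qed
  have p1: "1 \<le> card W" using fW vW by (metis One_nat_def Suc_leI card_gt_0_iff empty_iff)
  have fP: "f \<in> (W - {v}) \<rightarrow>\<^sub>E W" unfolding f_def using parW by auto
  have gP: "g \<in> {..<e} \<rightarrow>\<^sub>E W \<times> W"
  proof -
    have "ys k \<in> W \<times> W" if "k < e" for k
    proof -
      have "fst (ys k) \<in> W" using anc_props(2)[OF ry[OF that]] that unfolding W_def by blast
      moreover have "snd (ys k) \<in> W" using anc_props(2)[OF rx[OF that]] that unfolding W_def by blast
      ultimately show ?thesis by (simp add: mem_Times_iff)
    qed
    thus ?thesis unfolding g_def by auto
  qed
  define T where "T = (\<lambda>w. {w, par E v w}) ` (W - {v})"
  define X' where "X' = (\<lambda>k. {fst (ys k), snd (ys k)}) ` {..<e}"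
  have HsTX: "Hs v e W f g = T \<union> X'"
  proof -
    have "(\<lambda>w. {w, f w}) ` (W - {v}) = T" unfolding T_def f_def by (rule image_cong) auto
    moreover have "(\<lambda>k. {fst (g k), snd (g k)}) ` {..<e} = X'" unfolding X'_def g_def by (rule image_cong) auto
    ultimately show ?thesis unfolding Hs_def by simp
  qed
  have Tb: "T \<subseteq> bip_edges E"
  proof
    fix x assume "x \<in> T"
    then obtain w where w: "w \<in> W" "w \<noteq> v" "x = {w, par E v w}" unfolding T_def by auto
    have "{par E v w, w} \<in> bip_edges E" using preds_edge[OF tree_edge[OF wW[OF w(1)] w(2)]] .
    thus "x \<in> bip_edges E" using w(3) by (simp add: insert_commute)
  qed
  have Xb: "X' \<subseteq> bip_edges E"
  proof
    fix x assume "x \<in> X'"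
    then obtain k where k: "k < e" "x = {fst (ys k), snd (ys k)}" unfolding X'_def by auto
    have "{snd (ys k), fst (ys k)} \<in> bip_edges E" using preds_edge ys[OF k(1)] by blast
    thus "x \<in> bip_edges E" using k(2) by (simp add: insert_commute)
  qed
  have injT: "inj_on (\<lambda>w. {w, par E v w}) (W - {v})"
  proof (rule inj_onI)
    fix w w' assume w: "w \<in> W - {v}" and w': "w' \<in> W - {v}" and eq: "{w, par E v w} = {w', par E v w'}"
    show "w = w'"
    proof (rule ccontr)
      assume ne: "w \<noteq> w'"
      hence "w = par E v w'" "w' = par E v w" using eq by (metis doubleton_eq_iff)+
      moreover have "Suc (gdist E v (par E v w)) = gdist E v w" using preds_dist tree_edge wW w by blast
      moreover have "Suc (gdist E v (par E v w')) = gdist E v w'" using preds_dist tree_edge wW w' by blast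
      ultimately show False by simp
    qed
  qed
  have disj: "T \<inter> X' = {}"
  proof (rule ccontr)
    assume "T \<inter> X' \<noteq> {}"
    then obtain w k where w: "w \<in> W" "w \<noteq> v" and k: "k < e" and eq: "{w, par E v w} = {fst (ys k), snd (ys k)}"
      unfolding T_def X'_def by auto
    have pw: "Suc (gdist E v (par E v w)) = gdist E v w" using preds_dist tree_edge wW w by blast
    have py: "Suc (gdist E v (snd (ys k))) = gdist E v (fst (ys k))" using preds_dist ys[OF k] by blast
    from eq consider "w = fst (ys k)" "par E v w = snd (ys k)" | "w = snd (ys k)" "par E v w = fst (ys k)"
      by (metis doubleton_eq_iff)
    thus False
    proof cases
      case 1 thus False using ys[OF k] by simp
    next
      case 2 thus False using pw py by simp
    qed
  qed
  have cT: "card T = card W - 1" unfolding T_def using card_image[OF injT] fW vW by (simp add: card_Diff_singleton)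
  have cX: "card X' = e" unfolding X'_def using card_image[OF inj] by simp
  have "card (Hs v e W f g) = card W - 1 + e"
    unfolding HsTX using card_Un_disjoint[of T X'] disj fW cT cX unfolding T_def X'_def by simp
  hence "(W,f,g) \<in> XX n m v e (card W)" unfolding XX_def using vW WV fP gP by simp
  moreover have "Hs v e W f g \<subseteq> bip_edges E" using HsTX Tb Xb by simp
  ultimately show ?thesis using p1 cW by blast
qed

lemma XX_finite: "finite (XX n m v e p)"
proof -
  have "XX n m v e p \<subseteq> (SIGMA W:Pow (VV n m). ((W - {v}) \<rightarrow>\<^sub>E W) \<times> ({..<e} \<rightarrow>\<^sub>E W \<times> W))"
    unfolding XX_def by auto
  moreover have "finite (SIGMA W:Pow (VV n m). ((W - {v}) \<rightarrow>\<^sub>E W) \<times> ({..<e} \<rightarrow>\<^sub>E W \<times> W))"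
  proof (rule finite_SigmaI)
    show "finite (Pow (VV n m))" by (simp add: VV_finite)
    fix W assume "W \<in> Pow (VV n m)"
    hence "finite W" using VV_finite finite_subset by blast
    thus "finite (((W - {v}) \<rightarrow>\<^sub>E W) \<times> ({..<e} \<rightarrow>\<^sub>E W \<times> W))"
      by (intro finite_cartesian_product finite_PiE) auto
  qed
  ultimately show ?thesis by (rule finite_subset)
qed

lemma Hs_finite: "finite W \<Longrightarrow> finite (Hs v e W f g)"
  unfolding Hs_def by simp

lemma edge_bound:
  assumes S: "finite S" "card S \<le> h" and X0: "0 < n * t - (t + s + 2 * t * s + h)"
  shows "real (card {E\<in>biregular_graphs m n s t. S \<subseteq> bip_edges E})
     \<le> (real (t * s) / real (n * t - (t + s + 2 * t * s + h))) ^ card S * real (card (biregular_graphs m n s t))"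
proof (cases "\<exists>E0\<in>biregular_graphs m n s t. S \<subseteq> bip_edges E0")
  case True
  then obtain E0 where "S \<subseteq> bip_edges E0" by blast
  hence form: "\<forall>x\<in>S. \<exists>i j. x = {Inl i, Inr j}" unfolding bip_edges_def by blast
  define HP where "HP = {(i,j). {Inl i, Inr j} \<in> S}"
  define \<psi> where "\<psi> = (\<lambda>(i::nat,j::nat). {Inl i, Inr j} :: (nat+nat) set)"
  have inj: "inj_on \<psi> HP"
    by (rule inj_onI) (auto simp: \<psi>_def doubleton_eq_iff)
  have img: "\<psi> ` HP = S"
  proof
    show "\<psi> ` HP \<subseteq> S" unfolding HP_def \<psi>_def by auto
    show "S \<subseteq> \<psi> ` HP"
    proof
      fix x assume x: "x \<in> S"
      then obtain i j where "x = {Inl i, Inr j}" using form by blast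
      thus "x \<in> \<psi> ` HP" using x unfolding HP_def \<psi>_def by (auto intro!: image_eqI[of _ _ "(i,j)"])
    qed
  qed
  have fHP: "finite HP" using img S(1) inj finite_imageD by blast
  have cHP: "card HP = card S" using card_image[OF inj] img by simp
  have sub: "{E\<in>biregular_graphs m n s t. S \<subseteq> bip_edges E} \<subseteq> {E\<in>biregular_graphs m n s t. HP \<subseteq> E}"
  proof clarify
    fix E i j assume E: "E \<in> biregular_graphs m n s t" "S \<subseteq> bip_edges E" and ij: "(i,j) \<in> HP"
    hence "{Inl i, Inr j} \<in> bip_edges E" unfolding HP_def by auto
    thus "(i,j) \<in> E" by (auto simp: bip_edges_def doubleton_eq_iff)
  qed
  have "card {E\<in>biregular_graphs m n s t. S \<subseteq> bip_edges E} \<le> card {E\<in>biregular_graphs m n s t. HP \<subseteq> E}"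
    by (rule card_mono[OF _ sub]) (simp add: bg_finite)
  hence "real (card {E\<in>biregular_graphs m n s t. S \<subseteq> bip_edges E}) \<le> real (card {E\<in>biregular_graphs m n s t. HP \<subseteq> E})"
    by simp
  also have "\<dots> \<le> (real (t * s) / real (n * t - (t + s + 2 * t * s + h))) ^ card HP * real (card (biregular_graphs m n s t))"
    by (rule contain_bound[OF fHP _ X0]) (simp add: cHP S(2))
  finally show ?thesis using cHP by simp
next
  case False
  hence "{E\<in>biregular_graphs m n s t. S \<subseteq> bip_edges E} = {}" by blast
  hence "card {E\<in>biregular_graphs m n s t. S \<subseteq> bip_edges E} = 0" by (simp only: card.empty)
  thus ?thesis by simp
qed

lemma union_bound:
  assumes Ssub: "S \<subseteq> biregular_graphs m n s t"
    and Sstr: "\<And>E. E \<in> S \<Longrightarrow> \<exists>p. 1 \<le> p \<and> p \<le> P \<and> (\<exists>W f g. (W,f,g) \<in> XX n m v e p \<and> Hs v e W f g \<subseteq> bip_edges E)"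
    and Ph: "P - 1 + e \<le> h" and X0: "0 < n * t - (t + s + 2 * t * s + h)"
  shows "real (card S) \<le> (\<Sum>p\<in>{1..P}. real (card (XX n m v e p)) *
            (real (t * s) / real (n * t - (t + s + 2 * t * s + h))) ^ (p - 1 + e)) * real (card (biregular_graphs m n s t))"
proof -
  define G where "G = biregular_graphs m n s t"
  define q where "q = real (t * s) / real (n * t - (t + s + 2 * t * s + h))"
  define ev where "ev = (\<lambda>\<sigma>::((nat+nat) set \<times> (nat+nat \<Rightarrow> nat+nat) \<times> (nat \<Rightarrow> (nat+nat)\<times>(nat+nat))).
       {E\<in>G. Hs v e (fst \<sigma>) (fst (snd \<sigma>)) (snd (snd \<sigma>)) \<subseteq> bip_edges E})"
  have fG: "finite G" unfolding G_def by (rule bg_finite)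
  have "S \<subseteq> (\<Union>p\<in>{1..P}. \<Union>\<sigma>\<in>XX n m v e p. ev \<sigma>)"
  proof
    fix E assume E: "E \<in> S"
    obtain p W f g where pWfg: "1 \<le> p" "p \<le> P" "(W,f,g) \<in> XX n m v e p" "Hs v e W f g \<subseteq> bip_edges E"
      using Sstr[OF E] by blast
    have "E \<in> ev (W,f,g)" using E Ssub pWfg(4) unfolding ev_def G_def by auto
    hence "E \<in> (\<Union>\<sigma>\<in>XX n m v e p. ev \<sigma>)" using pWfg(3) by blast
    thus "E \<in> (\<Union>p\<in>{1..P}. \<Union>\<sigma>\<in>XX n m v e p. ev \<sigma>)" using pWfg(1,2) by auto
  qed
  moreover have "finite (\<Union>p\<in>{1..P}. \<Union>\<sigma>\<in>XX n m v e p. ev \<sigma>)"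
  proof (rule finite_subset[OF _ fG])
    show "(\<Union>p\<in>{1..P}. \<Union>\<sigma>\<in>XX n m v e p. ev \<sigma>) \<subseteq> G" unfolding ev_def by blast
  qed
  ultimately have "card S \<le> card (\<Union>p\<in>{1..P}. \<Union>\<sigma>\<in>XX n m v e p. ev \<sigma>)"
    by (simp add: card_mono)
  also have "\<dots> \<le> (\<Sum>p\<in>{1..P}. card (\<Union>\<sigma>\<in>XX n m v e p. ev \<sigma>))" by (rule card_UN_le) simp
  also have "\<dots> \<le> (\<Sum>p\<in>{1..P}. \<Sum>\<sigma>\<in>XX n m v e p. card (ev \<sigma>))"
    by (rule sum_mono) (rule card_UN_le[OF XX_finite])
  finally have c0: "card S \<le> (\<Sum>p\<in>{1..P}. \<Sum>\<sigma>\<in>XX n m v e p. card (ev \<sigma>))" .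
  have c1: "real (card S) \<le> (\<Sum>p\<in>{1..P}. \<Sum>\<sigma>\<in>XX n m v e p. real (card (ev \<sigma>)))"
    using of_nat_mono[OF c0] by (simp add: of_nat_sum)
  also have "\<dots> \<le> (\<Sum>p\<in>{1..P}. \<Sum>\<sigma>\<in>XX n m v e p. q ^ (p - 1 + e) * real (card G))"
  proof (intro sum_mono)
    fix p \<sigma> assume p: "p \<in> {1..P}" and \<sigma>: "\<sigma> \<in> XX n m v e p"
    obtain W f g where se: "\<sigma> = (W,f,g)" by (metis prod.exhaust)
    have W: "W \<subseteq> VV n m" "card (Hs v e W f g) = p - 1 + e" using \<sigma> se unfolding XX_def by auto
    have fW: "finite W" using W(1) VV_finite finite_subset by blast
    have "card (Hs v e W f g) \<le> h" using W(2) p Ph by auto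
    from edge_bound[OF Hs_finite[OF fW] this X0]
    show "real (card (ev \<sigma>)) \<le> q ^ (p - 1 + e) * real (card G)"
      unfolding ev_def se q_def G_def using W(2) by simp
  qed
  also have "\<dots> = (\<Sum>p\<in>{1..P}. real (card (XX n m v e p)) * q ^ (p - 1 + e)) * real (card G)"
    by (simp add: sum_distrib_right mult.assoc)
  finally show ?thesis unfolding q_def G_def .
qed

lemma pow_fact_le_exp:
  assumes "0 \<le> (x::real)"
  shows "x ^ n / fact n \<le> exp x"
proof -
  have "(\<Sum>k\<le>n. x ^ k / fact k) \<le> exp x"
    using assms summable_exp_generic[of x]
    by (auto simp: exp_def divide_inverse ac_simps intro!: sum_le_suminf)
  moreover have "x ^ n / fact n \<le> (\<Sum>k\<le>n. x ^ k / fact k)"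
    by (rule member_le_sum) (use assms in auto)
  ultimately show ?thesis by linarith
qed

lemma binom_pow_le:
  assumes p: "1 \<le> p" and N: "1 \<le> N"
  shows "real ((N - 1) choose (p - 1)) * real p ^ (p - 1) \<le> real N ^ (p - 1) * exp (real p)"
proof -
  define k where "k = p - 1"
  have pk: "p = Suc k" using p k_def by simp
  have "real ((N - 1) choose k) * fact k \<le> real ((N - 1) ^ k)"
    using binomial_fact_pow[of "N - 1" k] by (metis of_nat_fact of_nat_le_iff of_nat_mult)
  also have "\<dots> \<le> real N ^ k" by (simp add: power_mono)
  finally have c: "real ((N - 1) choose k) \<le> real N ^ k / fact k" by (simp add: field_simps)
  have f: "(fact p :: real) = real p * fact k" unfolding pk by (simp only: fact_Suc)
  have pp: "real p ^ p = real p * real p ^ k" unfolding pk by simp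
  have "real p ^ k / fact k = real p ^ p / fact p" unfolding f pp using p by simp
  also have "\<dots> \<le> exp (real p)" by (rule pow_fact_le_exp) simp
  finally have e: "real p ^ k / fact k \<le> exp (real p)" .
  have "real ((N - 1) choose k) * real p ^ k \<le> real N ^ k / fact k * real p ^ k"
    by (rule mult_right_mono[OF c]) simp
  also have "\<dots> = real N ^ k * (real p ^ k / fact k)" by simp
  also have "\<dots> \<le> real N ^ k * exp (real p)" by (rule mult_left_mono[OF e]) simp
  finally show ?thesis unfolding k_def .
qed

lemma sum_est:
  assumes v: "v \<in> VV n m" and nm: "1 \<le> n + m" and q: "0 \<le> q" and Nq: "real (n + m) * q \<le> 4 * real s"
    and s: "1 \<le> s"
  shows "(\<Sum>p\<in>{1..P}. real (card (XX n m v e p)) * q ^ (p - 1 + e))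
     \<le> real P * (exp (real P) * (4 * real s) ^ P * real P ^ (2 * e) * q ^ e)"
proof -
  have "(\<Sum>p\<in>{1..P}. real (card (XX n m v e p)) * q ^ (p - 1 + e))
      \<le> (\<Sum>p\<in>{1..P}. exp (real P) * (4 * real s) ^ P * real P ^ (2 * e) * q ^ e)"
  proof (rule sum_mono)
    fix p assume p: "p \<in> {1..P}"
    have p1: "1 \<le> p" and pP: "p \<le> P" using p by auto
    have "real (card (XX n m v e p)) \<le> real (((n + m - 1) choose (p - 1)) * p ^ (p - 1) * (p * p) ^ e)"
      using XX_card[OF v p1] by (simp only: of_nat_le_iff)
    also have "\<dots> = real ((n + m - 1) choose (p - 1)) * real p ^ (p - 1) * real p ^ (2 * e)"
      by (simp add: power_mult_distrib power_mult power2_eq_square)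
    also have "\<dots> \<le> real (n + m) ^ (p - 1) * exp (real p) * real p ^ (2 * e)"
      by (rule mult_right_mono[OF binom_pow_le[OF p1 nm]]) simp
    finally have c: "real (card (XX n m v e p)) \<le> real (n + m) ^ (p - 1) * exp (real p) * real p ^ (2 * e)" .
    have "real (card (XX n m v e p)) * q ^ (p - 1 + e)
        \<le> real (n + m) ^ (p - 1) * exp (real p) * real p ^ (2 * e) * q ^ (p - 1 + e)"
      by (rule mult_right_mono[OF c]) (simp add: q)
    also have "\<dots> = (real (n + m) * q) ^ (p - 1) * exp (real p) * real p ^ (2 * e) * q ^ e"
      by (simp add: power_add power_mult_distrib)
    also have "\<dots> \<le> (4 * real s) ^ P * exp (real P) * real P ^ (2 * e) * q ^ e"
    proof -
      have "(real (n + m) * q) ^ (p - 1) \<le> (4 * real s) ^ (p - 1)"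
        by (rule power_mono[OF Nq]) (simp add: q)
      also have "\<dots> \<le> (4 * real s) ^ P" by (rule power_increasing) (use pP s in auto)
      finally have a: "(real (n + m) * q) ^ (p - 1) \<le> (4 * real s) ^ P" .
      have b: "exp (real p) \<le> exp (real P)" using pP by simp
      have c: "real p ^ (2 * e) \<le> real P ^ (2 * e)" by (rule power_mono) (use pP in auto)
      have "(real (n + m) * q) ^ (p - 1) * exp (real p) \<le> (4 * real s) ^ P * exp (real P)"
        by (rule mult_mono[OF a b]) (auto simp: q)
      hence "(real (n + m) * q) ^ (p - 1) * exp (real p) * real p ^ (2 * e) \<le> (4 * real s) ^ P * exp (real P) * real P ^ (2 * e)"
        by (rule mult_mono[OF _ c]) (auto simp: q)
      thus ?thesis by (rule mult_right_mono) (simp add: q)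
    qed
    finally show "real (card (XX n m v e p)) * q ^ (p - 1 + e) \<le> exp (real P) * (4 * real s) ^ P * real P ^ (2 * e) * q ^ e"
      by (simp add: mult_ac)
  qed
  also have "\<dots> = real P * (exp (real P) * (4 * real s) ^ P * real P ^ (2 * e) * q ^ e)" by simp
  finally show ?thesis .
qed

lemma mod_inj_aux:
  fixes a b m x :: nat
  assumes "a < m" "b < m" "(x + a) mod m = (x + b) mod m"
  shows "a = b"
proof -
  have "a = b" if ab: "b \<le> a" "a < m" "(x + a) mod m = (x + b) mod m" for a b
  proof -
    obtain s where "x + a = x + b + m * s" using mod_eq_nat1E[OF ab(3)] ab(1) by auto
    hence e: "a = b + m * s" by simp
    show "a = b"
    proof (cases "s = 0")
      case True thus ?thesis using e by simp
    next
      case False hence "m \<le> m * s" by simp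
      thus ?thesis using e ab(2) by linarith
    qed
  qed
  thus ?thesis using assms by (metis nat_le_linear)
qed

lemma bg_nonempty:
  assumes t1: "1 \<le> t" and tm: "t \<le> m" and nt: "n * t = m * s"
  shows "biregular_graphs m n s t \<noteq> {}"
proof -
  define E0 where "E0 = {(i, (i * t + a) mod m) | i a. i < n \<and> a < t}"
  have m0: "0 < m" using t1 tm by simp
  have "E0 \<subseteq> {..<n} \<times> {..<m}" unfolding E0_def using m0 by auto
  moreover have "card {j. (i, j) \<in> E0} = t" if i: "i < n" for i
  proof -
    have "{j. (i, j) \<in> E0} = (\<lambda>a. (i * t + a) mod m) ` {..<t}" unfolding E0_def using i by auto
    moreover have "inj_on (\<lambda>a. (i * t + a) mod m) {..<t}"
    proof (rule inj_onI)
      fix a b assume "a \<in> {..<t}" "b \<in> {..<t}" "(i * t + a) mod m = (i * t + b) mod m"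
      thus "a = b" using tm mod_inj_aux[of a m b "i * t"] by simp
    qed
    ultimately show ?thesis by (simp add: card_image)
  qed
  moreover have "card {i. (i, j) \<in> E0} = s" if j: "j < m" for j
  proof -
    define K where "K = {k. k < n * t \<and> k mod m = j}"
    have "bij_betw (\<lambda>l. j + m * l) {..<s} K"
    proof (rule bij_betwI[of _ _ _ "\<lambda>k. k div m"])
      show "(\<lambda>l. j + m * l) \<in> {..<s} \<rightarrow> K"
      proof
        fix l assume l: "l \<in> {..<s}"
        have "j + m * l < m + m * l" using j by simp
        also have "\<dots> = m * (l + 1)" by simp
        also have "\<dots> \<le> m * s" using l by (intro mult_left_mono) auto
        finally show "j + m * l \<in> K" unfolding K_def using j nt by simp
      qed
      show "(\<lambda>k. k div m) \<in> K \<rightarrow> {..<s}"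
      proof
        fix k assume "k \<in> K"
        hence "k < m * s" unfolding K_def using nt by simp
        thus "k div m \<in> {..<s}" using m0 by (simp add: div_less_iff_less_mult mult.commute)
      qed
      show "(j + m * l) div m = l" if "l \<in> {..<s}" for l using j by simp
      show "j + m * (k div m) = k" if "k \<in> K" for k
      proof -
        have "k mod m = j" using that unfolding K_def by simp
        thus ?thesis using mod_mult_div_eq[of k m] by simp
      qed
    qed
    hence "card {..<s} = card K" by (rule bij_betw_same_card)
    hence cK: "card K = s" by simp
    have "bij_betw (\<lambda>k. k div t) K {i. (i, j) \<in> E0}"
    proof (rule bij_betw_imageI)
      show "inj_on (\<lambda>k. k div t) K"
      proof (rule inj_onI)
        fix k1 k2 assume k1: "k1 \<in> K" and k2: "k2 \<in> K" and eq: "k1 div t = k2 div t"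
        have e1: "k1 div t * t + k1 mod t = k1" by (rule div_mult_mod_eq)
        have e2: "k1 div t * t + k2 mod t = k2" using eq div_mult_mod_eq[of k2 t] by simp
        have "k1 mod m = k2 mod m" using k1 k2 unfolding K_def by simp
        hence "(k1 div t * t + k1 mod t) mod m = (k1 div t * t + k2 mod t) mod m" using e1 e2 by simp
        moreover have "k1 mod t < m" "k2 mod t < m"
        proof -
          have "0 < t" using t1 by simp
          hence "k1 mod t < t" "k2 mod t < t" by simp_all
          thus "k1 mod t < m" "k2 mod t < m" using tm by linarith+
        qed
        ultimately have "k1 mod t = k2 mod t" using mod_inj_aux by blast
        thus "k1 = k2" using e1 e2 by linarith
      qed
      show "(\<lambda>k. k div t) ` K = {i. (i, j) \<in> E0}"
      proof
        show "(\<lambda>k. k div t) ` K \<subseteq> {i. (i, j) \<in> E0}"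
        proof
          fix i assume "i \<in> (\<lambda>k. k div t) ` K"
          then obtain k where k: "k \<in> K" "i = k div t" by blast
          have tp: "0 < t" using t1 by simp
          have kK: "k < n * t" "k mod m = j" using k(1) unfolding K_def by auto
          have i1: "i < n" using kK(1) k(2) tp by (simp add: div_less_iff_less_mult)
          have i2: "k mod t < t" using tp by simp
          have i3: "(i * t + k mod t) mod m = j" using kK(2) k(2) by (simp add: div_mult_mod_eq)
          have "(i, (i * t + k mod t) mod m) \<in> E0" unfolding E0_def using i1 i2 by blast
          thus "i \<in> {i. (i, j) \<in> E0}" using i3 by simp
        qed
        show "{i. (i, j) \<in> E0} \<subseteq> (\<lambda>k. k div t) ` K"
        proof
          fix i assume "i \<in> {i. (i, j) \<in> E0}"
          then obtain a where a: "i < n" "a < t" "j = (i * t + a) mod m" unfolding E0_def by auto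
          have "i * t + a < (i + 1) * t" using a by simp
          also have "\<dots> \<le> n * t" using a by (intro mult_right_mono) auto
          finally have "i * t + a \<in> K" unfolding K_def using a by simp
          moreover have "(i * t + a) div t = i" using a by simp
          ultimately show "i \<in> (\<lambda>k. k div t) ` K" by (intro image_eqI[of _ _ "i * t + a"]) simp_all
        qed
      qed
    qed
    hence "card K = card {i. (i, j) \<in> E0}" by (rule bij_betw_same_card)
    thus ?thesis using cK by simp
  qed
  ultimately have "E0 \<in> biregular_graphs m n s t" by (simp add: biregular_graphs_def)
  thus ?thesis by blast
qed

lemma numeric_facts:
  fixes n mm s t L :: nat and \<alpha> :: real
  assumes \<alpha>: "0 < \<alpha>" "\<alpha> < 1" and mm: "real mm = \<alpha> * real n" and ts: "real t = \<alpha> * real s"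
    and t3: "3 \<le> t" and L1: "1 \<le> L" and Lb: "real L \<le> 1/100 * ln (real mm) / ln (real (t * s))"
  shows "4 \<le> s" "2 \<le> mm" "mm \<le> n" "t \<le> mm" "n * t = mm * s"
    "real (t * s) \<le> real n powr (1/100)" "real L \<le> ln (real n)" "real s ^ L \<le> real n powr (1/100)"
proof -
  have "real t < real s"
  proof -
    have "s \<noteq> 0"
    proof
      assume "s = 0" hence "real t = 0" using ts by simp
      thus False using t3 by simp
    qed
    hence "0 < real s" by simp
    hence "\<alpha> * real s < real s" using \<alpha> by simp
    thus ?thesis using ts by simp
  qed
  hence ts': "t < s" by simp
  thus s4: "4 \<le> s" using t3 by simp
  have ts12: "12 \<le> real (t * s)"
  proof -
    have "(3::nat) * 4 \<le> t * s" using t3 s4 by (intro mult_mono) auto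
    hence "real ((3::nat) * 4) \<le> real (t * s)" by (simp only: of_nat_le_iff)
    thus ?thesis by simp
  qed
  have lts: "1 < ln (real (t * s))"
  proof -
    have "exp 1 < real (t * s)" using exp_le ts12 by linarith
    hence "ln (exp 1) < ln (real (t * s))" using ts12 by (subst ln_less_cancel_iff) auto
    thus ?thesis by simp
  qed
  have Lln: "real L * ln (real (t * s)) \<le> 1/100 * ln (real mm)"
    using Lb lts by (simp add: pos_le_divide_eq)
  have L1': "1 \<le> real L" using L1 by simp
  have lnts_le: "ln (real (t * s)) \<le> real L * ln (real (t * s))"
    using L1' lts by simp
  have lnmm: "0 < ln (real mm)" using Lln lnts_le lts by linarith
  have "1 < real mm"
  proof (rule ccontr)
    assume "\<not> 1 < real mm"
    hence "real mm \<le> 1" by simp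
    moreover have "0 \<le> real mm" by simp
    ultimately have "ln (real mm) \<le> 0" by (cases "mm = 0") auto
    thus False using lnmm by simp
  qed
  thus mm2: "2 \<le> mm" by simp
  show mmn: "mm \<le> n"
  proof -
    have "\<alpha> * real n \<le> 1 * real n" using \<alpha> by (intro mult_right_mono) auto
    hence "real mm \<le> real n" using mm by simp
    thus ?thesis by simp
  qed
  show "n * t = mm * s"
  proof -
    have "real (n * t) = real (mm * s)" using mm ts by (simp add: mult_ac)
    thus ?thesis by (simp only: of_nat_eq_iff)
  qed
  have mmpos: "0 < real mm" using mm2 by simp
  have tspos: "0 < real (t * s)" using ts12 by linarith
  have tsmm: "real (t * s) \<le> real mm powr (1/100)"
  proof -
    have "ln (real (t * s)) \<le> ln (real mm powr (1/100))" using Lln lnts_le mmpos by simp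
    thus ?thesis using tspos mmpos by (subst (asm) ln_le_cancel_iff) auto
  qed
  also have "\<dots> \<le> real n powr (1/100)" using mmn by (intro powr_mono2) auto
  finally show "real (t * s) \<le> real n powr (1/100)" .
  show "t \<le> mm"
  proof -
    have "t * 1 \<le> t * s" using s4 by (intro mult_left_mono) auto
    hence "real t \<le> real (t * s)" by (simp only: of_nat_le_iff mult_1_right)
    also have "\<dots> \<le> real mm powr (1/100)" by (rule tsmm)
    also have "\<dots> \<le> real mm powr 1" using mm2 by (intro powr_mono) auto
    finally show ?thesis using mmpos by simp
  qed
  have lnmn: "ln (real mm) \<le> ln (real n)" using mmn mmpos by simp
  show "real L \<le> ln (real n)"
  proof -
    have "real L \<le> real L * ln (real (t * s))" using L1' lts by simp
    also have "\<dots> \<le> 1/100 * ln (real mm)" by (rule Lln)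
    also have "\<dots> \<le> ln (real mm)" using lnmm by simp
    finally show ?thesis using lnmn by simp
  qed
  show "real s ^ L \<le> real n powr (1/100)"
  proof -
    have spos: "0 < real s" using s4 by simp
    have "ln (real s) \<le> ln (real (t * s))" using spos t3 by simp
    hence "ln (real s ^ L) \<le> real L * ln (real (t * s))" using spos by (simp add: ln_realpow mult_left_mono)
    also have "\<dots> \<le> 1/100 * ln (real mm)" by (rule Lln)
    also have "\<dots> \<le> 1/100 * ln (real n)" using lnmn by simp
    also have "\<dots> = ln (real n powr (1/100))" by simp
    finally show ?thesis using spos mmpos mmn by (subst (asm) ln_le_cancel_iff) auto
  qed
qed


lemma exp_pow_le:
  assumes s4: "4 \<le> s"
  shows "exp (real P) * (4 * real s) ^ P \<le> real s ^ (3 * P)"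
proof -
  have "exp (real P) = exp 1 ^ P" using exp_of_nat_mult[of P 1] by simp
  hence "exp (real P) * (4 * real s) ^ P = (4 * exp 1 * real s) ^ P" by (simp add: power_mult_distrib)
  also have "\<dots> \<le> (real s ^ 3) ^ P"
  proof (rule power_mono)
    have s4': "4 \<le> real s" using s4 by simp
    have "4 * exp 1 * real s \<le> 4 * 3 * real s" using exp_le s4' by (intro mult_right_mono) auto
    also have "\<dots> \<le> real s * real s * real s" using s4' by (intro mult_right_mono) (auto intro: order_trans[OF _ mult_mono[OF s4' s4']])
    finally show "4 * exp 1 * real s \<le> real s ^ 3" by (simp add: power3_eq_cube)
  qed simp
  also have "\<dots> = real s ^ (3 * P)" by (simp add: power_mult)
  finally show ?thesis .
qed

lemma spow_le:
  assumes sL: "real s ^ L \<le> real n powr (1/100)" and s1: "1 \<le> s" and k: "k \<le> 50 * L"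
  shows "real s ^ k \<le> sqrt (real n)"
proof -
  have "real s ^ k \<le> real s ^ (L * 50)" using k s1 by (intro power_increasing) auto
  also have "\<dots> = (real s ^ L) ^ 50" by (simp add: power_mult)
  also have "\<dots> \<le> (real n powr (1/100)) ^ 50" by (rule power_mono[OF sL]) simp
  also have "\<dots> \<le> sqrt (real n)"
  proof (cases "n = 0")
    case True thus ?thesis by simp
  next
    case False
    hence "(real n powr (1/100)) ^ 50 = real n powr (1/2)" by (subst powr_power) auto
    also have "\<dots> = sqrt (real n)" by (rule powr_half_sqrt) simp
    finally show ?thesis by simp
  qed
  finally show ?thesis .
qed

lemma prob_lower:
  assumes fG: "finite G" and GNE: "G \<noteq> {}" and Bad: "Bad \<subseteq> G" and ev: "\<And>E. E \<in> G \<Longrightarrow> E \<notin> Bad \<Longrightarrow> E \<in> Ev"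
    and cb: "real (card Bad) \<le> \<beta> * real (card G)"
  shows "1 - \<beta> \<le> measure_pmf.prob (pmf_of_set G) Ev"
proof -
  have cG: "0 < real (card G)" using fG GNE by (simp add: card_gt_0_iff)
  have "G - Bad \<subseteq> G \<inter> Ev" using ev by blast
  hence "card (G - Bad) \<le> card (G \<inter> Ev)" using fG by (intro card_mono) auto
  moreover have "card (G - Bad) = card G - card Bad" using Bad fG by (simp add: card_Diff_subset finite_subset)
  moreover have "card Bad \<le> card G" using Bad fG by (simp add: card_mono)
  ultimately have "real (card G) - real (card Bad) \<le> real (card (G \<inter> Ev))" by simp
  hence "real (card G) - \<beta> * real (card G) \<le> real (card (G \<inter> Ev))" using cb by linarith
  hence "1 - \<beta> \<le> real (card (G \<inter> Ev)) / real (card G)" using cG by (simp add: field_simps)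
  also have "\<dots> = measure_pmf.prob (pmf_of_set G) Ev" using measure_pmf_of_set[OF GNE fG] by simp
  finally show ?thesis .
qed


definition B1 :: "real \<Rightarrow> real" where "B1 x = 2 * 8 ^ 3 * ln x ^ 3 / sqrt x"
definition B2 :: "real \<Rightarrow> real" where "B2 x = 8 * 16 ^ 5 * ln x ^ 5 / sqrt x"

lemma main_bound:
  fixes n mm s t L :: nat and \<alpha> :: real
  assumes \<alpha>: "0 < \<alpha>" "\<alpha> < 1" and mm: "real mm = \<alpha> * real n" and ts: "real t = \<alpha> * real s"
    and t3: "3 \<le> t" and L1: "1 \<le> L" and Lb: "real L \<le> 1/100 * ln (real mm) / ln (real (t * s))"
    and big: "4 * real n powr (1/100) + 18 * ln (real n) \<le> real n"
  shows "1 - B1 (real n) \<le> measure_pmf.prob (pmf_of_set (biregular_graphs mm n s t))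
            {E. \<exists>i < n. \<forall>C. \<not> is_cycle (ball_graph E (Inl i) (2 * L + 1)) C}"
    "1 - B2 (real n) \<le> measure_pmf.prob (pmf_of_set (biregular_graphs mm n s t))
            {E. bicycle_free_at n mm E (2 * L + 1)}"
proof -
  note nf = numeric_facts[OF assms(1-7)]
  have s4: "4 \<le> s" and mm2: "2 \<le> mm" and mmn: "mm \<le> n" and tmm: "t \<le> mm" and ntms: "n * t = mm * s"
    and tsn: "real (t * s) \<le> real n powr (1/100)" and Lln: "real L \<le> ln (real n)"
    and sL: "real s ^ L \<le> real n powr (1/100)" using nf by auto
  define r where "r = 2 * L + 1"
  define G where "G = biregular_graphs mm n s t"
  define P1 where "P1 = 2 * 1 * (r + 1)"
  define P2 where "P2 = 2 * 2 * (r + 1)"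
  define h where "h = P2 + 2"
  define X0 where "X0 = n * t - (t + s + 2 * t * s + h)"
  define q where "q = real (t * s) / real X0"
  have fG: "finite G" unfolding G_def by (rule bg_finite)
  have GNE: "G \<noteq> {}" unfolding G_def by (rule bg_nonempty) (use t3 tmm ntms in auto)
  have n2: "2 \<le> n" using mm2 mmn by simp
  have rn: "0 < real n" using n2 by simp
  have stuff: "real (t + s + 2 * t * s + h) \<le> real n"
  proof -
    have "t + s + 2 * t * s \<le> 4 * (t * s)"
    proof -
      have "t * 1 \<le> t * s" "1 * s \<le> t * s" using s4 t3 by (intro mult_left_mono mult_right_mono; simp)+
      thus ?thesis by linarith
    qed
    hence "real (t + s + 2 * t * s) \<le> real (4 * (t * s))" by (simp only: of_nat_le_iff)
    also have "\<dots> = 4 * real (t * s)" by simp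
    also have "\<dots> \<le> 4 * real n powr (1/100)" using tsn by simp
    finally have a: "real (t + s + 2 * t * s) \<le> 4 * real n powr (1/100)" .
    have "h = 8 * L + 10" unfolding h_def P2_def r_def by simp
    hence "h \<le> 18 * L" using L1 by simp
    hence "real h \<le> 18 * real L" by simp
    also have "\<dots> \<le> 18 * ln (real n)" using Lln by simp
    finally have b: "real h \<le> 18 * ln (real n)" .
    have "real (t + s + 2 * t * s + h) = real (t + s + 2 * t * s) + real h" by simp
    also have "\<dots> \<le> real n" using a b big by linarith
    finally show ?thesis .
  qed
  have nt3: "3 * real n \<le> real (n * t)"
  proof -
    have "real n * 3 \<le> real n * real t" using t3 by (intro mult_left_mono) auto
    thus ?thesis by (simp add: mult.commute)
  qed
  have X0r: "real X0 = real (n * t) - real (t + s + 2 * t * s + h)"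
  proof -
    have "real (t + s + 2 * t * s + h) \<le> real (n * t)" using stuff nt3 rn by linarith
    hence "t + s + 2 * t * s + h \<le> n * t" by (simp only: of_nat_le_iff)
    thus ?thesis unfolding X0_def by (simp only: of_nat_diff)
  qed
  have X0half: "real (n * t) / 2 \<le> real X0" using X0r stuff nt3 by linarith
  have X0pos: "0 < X0"
  proof -
    have "0 < real (n * t)" using nt3 rn by linarith
    hence "0 < real X0" using X0half by linarith
    thus ?thesis by simp
  qed
  have q0: "0 \<le> q" unfolding q_def by simp
  have q2: "q \<le> 2 * real s / real n"
  proof -
    have pos: "0 < real (n * t) / 2" using nt3 rn by linarith
    have "q \<le> real (t * s) / (real (n * t) / 2)" unfolding q_def
      by (rule divide_left_mono[OF X0half]) (use pos X0half in auto)
    also have "\<dots> = 2 * real s / real n" using t3 rn by (simp add: field_simps)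
    finally show ?thesis .
  qed
  have Nq: "real (n + mm) * q \<le> 4 * real s"
  proof -
    have "real (n + mm) \<le> 2 * real n" using mmn by simp
    hence "real (n + mm) * q \<le> 2 * real n * (2 * real s / real n)" using q0 q2 by (intro mult_mono) auto
    also have "\<dots> = 4 * real s" using rn by (simp add: field_simps)
    finally show ?thesis .
  qed
  have nm1: "1 \<le> n + mm" using n2 by simp
  have s1: "1 \<le> s" using s4 by simp
  have Esub: "E \<subseteq> {..<n} \<times> {..<mm}" if "E \<in> G" for E using that bg_sub unfolding G_def by blast
  have Lr: "real L \<ge> 1" using L1 by simp
  show "1 - B1 (real n) \<le> measure_pmf.prob (pmf_of_set (biregular_graphs mm n s t))
            {E. \<exists>i < n. \<forall>C. \<not> is_cycle (ball_graph E (Inl i) (2 * L + 1)) C}"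
  proof -
    define v0 :: "nat + nat" where "v0 = Inl 0"
    have v0: "v0 \<in> VV n mm" unfolding v0_def VV_def using n2 by simp
    define Bad where "Bad = {E\<in>G. ExtraE E v0 r \<noteq> {}}"
    have "real (card Bad) \<le> (\<Sum>p\<in>{1..P1}. real (card (XX n mm v0 1 p)) * q ^ (p - 1 + 1)) * real (card G)"
      unfolding q_def X0_def G_def
    proof (rule union_bound)
      show "Bad \<subseteq> biregular_graphs mm n s t" unfolding Bad_def G_def by blast
      show "P1 - 1 + 1 \<le> h" unfolding h_def P1_def P2_def by simp
      show "0 < n * t - (t + s + 2 * t * s + h)" using X0pos X0_def by simp
      fix E assume E: "E \<in> Bad"
      then obtain z where z: "z \<in> ExtraE E v0 r" unfolding Bad_def by blast
      then obtain y x where yx: "reach E v0 y" "gdist E v0 y \<le> r" "x \<in> preds E v0 y" "x \<noteq> par E v0 y"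
        unfolding ExtraE_def by blast
      have "\<exists>p. 1 \<le> p \<and> p \<le> 2 * 1 * (r + 1) \<and> (\<exists>W f g. (W,f,g) \<in> XX n mm v0 1 p \<and> Hs v0 1 W f g \<subseteq> bip_edges E)"
      proof (rule extract_struct[OF Esub v0, where e=1 and ys="\<lambda>_. (y,x)" and r=r])
        show "E \<in> G" using E unfolding Bad_def by blast
      qed (use yx in \<open>auto simp: inj_on_def\<close>)
      thus "\<exists>p. 1 \<le> p \<and> p \<le> P1 \<and> (\<exists>W f g. (W,f,g) \<in> XX n mm v0 1 p \<and> Hs v0 1 W f g \<subseteq> bip_edges E)"
        unfolding P1_def .
    qed
    also have "\<dots> \<le> (real P1 * (exp (real P1) * (4 * real s) ^ P1 * real P1 ^ (2 * 1) * q ^ 1)) * real (card G)"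
      by (rule mult_right_mono[OF sum_est[OF v0 nm1 q0 Nq s1]]) simp
    also have "\<dots> \<le> B1 (real n) * real (card G)"
    proof (rule mult_right_mono)
      have P1L: "P1 = 4 * L + 4" unfolding P1_def r_def by simp
      have P1r: "real P1 \<le> 8 * ln (real n)" using P1L Lln Lr by simp
      have "real P1 * (exp (real P1) * (4 * real s) ^ P1 * real P1 ^ (2 * 1) * q ^ 1)
          = real P1 ^ 3 * (exp (real P1) * (4 * real s) ^ P1) * q" by (simp add: power3_eq_cube power2_eq_square)
      also have "\<dots> \<le> real P1 ^ 3 * real s ^ (3 * P1) * (2 * real s / real n)"
        using exp_pow_le[OF s4, of P1] q2 q0 by (intro mult_mono) auto
      also have "\<dots> = 2 * real P1 ^ 3 * real s ^ (3 * P1 + 1) / real n" by (simp add: field_simps)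
      also have "\<dots> \<le> 2 * (8 * ln (real n)) ^ 3 * sqrt (real n) / real n"
      proof -
        have "real s ^ (3 * P1 + 1) \<le> sqrt (real n)" by (rule spow_le[OF sL s1]) (use P1L L1 in simp)
        moreover have "real P1 ^ 3 \<le> (8 * ln (real n)) ^ 3" by (rule power_mono[OF P1r]) simp
        ultimately show ?thesis using rn by (intro divide_right_mono mult_mono mult_left_mono) auto
      qed
      also have "\<dots> = B1 (real n)" unfolding B1_def using rn
        by (simp add: field_simps power3_eq_cube)
      finally show "real P1 * (exp (real P1) * (4 * real s) ^ P1 * real P1 ^ (2 * 1) * q ^ 1) \<le> B1 (real n)" .
    qed simp
    finally have cb: "real (card Bad) \<le> B1 (real n) * real (card G)" .
    show ?thesis unfolding G_def[symmetric] r_def[symmetric]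
    proof (rule prob_lower[OF fG GNE _ _ cb])
      show "Bad \<subseteq> G" unfolding Bad_def by blast
      fix E assume E: "E \<in> G" "E \<notin> Bad"
      hence "ExtraE E v0 r = {}" unfolding Bad_def by blast
      hence "\<forall>C. \<not> is_cycle (ball_graph E (Inl 0) r) C" using cycle_Ex unfolding v0_def by blast
      thus "E \<in> {E. \<exists>i < n. \<forall>C. \<not> is_cycle (ball_graph E (Inl i) r) C}" using n2 by (intro CollectI exI[of _ 0]) simp
    qed
  qed
  show "1 - B2 (real n) \<le> measure_pmf.prob (pmf_of_set (biregular_graphs mm n s t))
            {E. bicycle_free_at n mm E (2 * L + 1)}"
  proof -
    define \<beta> where "\<beta> = real P2 * (exp (real P2) * (4 * real s) ^ P2 * real P2 ^ (2 * 2) * q ^ 2)"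
    define Badv where "Badv v = {E\<in>G. \<exists>e1 e2. e1 \<in> ExtraE E v r \<and> e2 \<in> ExtraE E v r \<and> e1 \<noteq> e2}" for v
    define Bad where "Bad = (\<Union>v\<in>VV n mm. Badv v)"
    have cv: "real (card (Badv v)) \<le> \<beta> * real (card G)" if v: "v \<in> VV n mm" for v
    proof -
      have "real (card (Badv v)) \<le> (\<Sum>p\<in>{1..P2}. real (card (XX n mm v 2 p)) * q ^ (p - 1 + 2)) * real (card G)"
        unfolding q_def X0_def G_def
      proof (rule union_bound)
        show "Badv v \<subseteq> biregular_graphs mm n s t" unfolding Badv_def G_def by blast
        show "P2 - 1 + 2 \<le> h" unfolding h_def P2_def by simp
        show "0 < n * t - (t + s + 2 * t * s + h)" using X0pos X0_def by simp
        fix E assume E: "E \<in> Badv v"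
        then obtain e1 e2 where ee: "e1 \<in> ExtraE E v r" "e2 \<in> ExtraE E v r" "e1 \<noteq> e2" unfolding Badv_def by blast
        obtain y1 x1 where yx1: "e1 = {y1,x1}" "reach E v y1" "gdist E v y1 \<le> r" "x1 \<in> preds E v y1" "x1 \<noteq> par E v y1"
          using ee(1) unfolding ExtraE_def by blast
        obtain y2 x2 where yx2: "e2 = {y2,x2}" "reach E v y2" "gdist E v y2 \<le> r" "x2 \<in> preds E v y2" "x2 \<noteq> par E v y2"
          using ee(2) unfolding ExtraE_def by blast
        define ys where "ys = (\<lambda>k::nat. if k = 0 then (y1,x1) else (y2,x2))"
        have EG: "E \<in> G" using E unfolding Badv_def by blast
        have "\<exists>p. 1 \<le> p \<and> p \<le> 2 * 2 * (r + 1) \<and> (\<exists>W f g. (W,f,g) \<in> XX n mm v 2 p \<and> Hs v 2 W f g \<subseteq> bip_edges E)"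
        proof (rule extract_struct[OF Esub[OF EG] v, where e=2 and ys=ys and r=r])
          show "1 \<le> (2::nat)" by simp
          fix k assume "k < (2::nat)"
          thus "reach E v (fst (ys k)) \<and> gdist E v (fst (ys k)) \<le> r \<and> snd (ys k) \<in> preds E v (fst (ys k))
               \<and> snd (ys k) \<noteq> par E v (fst (ys k))" unfolding ys_def using yx1 yx2 by auto
        next
          show "inj_on (\<lambda>k. {fst (ys k), snd (ys k)}) {..<2}"
          proof (rule inj_onI)
            fix a b assume ab: "a \<in> {..<(2::nat)}" "b \<in> {..<(2::nat)}"
              and eq: "{fst (ys a), snd (ys a)} = {fst (ys b), snd (ys b)}"
            show "a = b"
            proof (rule ccontr)
              assume "a \<noteq> b"
              hence "(a = 0 \<and> b = 1) \<or> (a = 1 \<and> b = 0)" using ab by auto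
              hence "e1 = e2" using eq yx1(1) yx2(1) unfolding ys_def by auto
              thus False using ee(3) by simp
            qed
          qed
        qed
        thus "\<exists>p. 1 \<le> p \<and> p \<le> P2 \<and> (\<exists>W f g. (W,f,g) \<in> XX n mm v 2 p \<and> Hs v 2 W f g \<subseteq> bip_edges E)"
          unfolding P2_def .
      qed
      also have "\<dots> \<le> \<beta> * real (card G)" unfolding \<beta>_def
        by (rule mult_right_mono[OF sum_est[OF v nm1 q0 Nq s1]]) simp
      finally show ?thesis .
    qed
    have "card Bad \<le> (\<Sum>v\<in>VV n mm. card (Badv v))" unfolding Bad_def by (rule card_UN_le) (rule VV_finite)
    hence "real (card Bad) \<le> (\<Sum>v\<in>VV n mm. real (card (Badv v)))" by (metis of_nat_le_iff of_nat_sum)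
    also have "\<dots> \<le> (\<Sum>v\<in>VV n mm. \<beta> * real (card G))" by (rule sum_mono) (rule cv)
    also have "\<dots> = (real (n + mm) * \<beta>) * real (card G)" by (simp add: VV_card)
    also have "\<dots> \<le> B2 (real n) * real (card G)"
    proof (rule mult_right_mono)
      have P2L: "P2 = 8 * L + 8" unfolding P2_def r_def by simp
      have P2r: "real P2 \<le> 16 * ln (real n)" using P2L Lln Lr by simp
      have nm2: "real (n + mm) \<le> 2 * real n" using mmn by simp
      have "real (n + mm) * \<beta> = real (n + mm) * (real P2 ^ 5 * (exp (real P2) * (4 * real s) ^ P2) * q ^ 2)"
        unfolding \<beta>_def by (simp add: power_mult power2_eq_square power3_eq_cube)
          (simp add: eval_nat_numeral mult_ac)
      also have "\<dots> \<le> (2 * real n) * (real P2 ^ 5 * real s ^ (3 * P2) * (2 * real s / real n) ^ 2)"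
        using exp_pow_le[OF s4, of P2] q2 q0 nm2
        by (intro mult_mono power_mono) (auto simp: zero_le_mult_iff)
      also have "\<dots> = 8 * real P2 ^ 5 * real s ^ (3 * P2 + 2) / real n" using rn
        by (simp add: field_simps power2_eq_square)
      also have "\<dots> \<le> 8 * (16 * ln (real n)) ^ 5 * sqrt (real n) / real n"
      proof -
        have "real s ^ (3 * P2 + 2) \<le> sqrt (real n)" by (rule spow_le[OF sL s1]) (use P2L L1 in simp)
        moreover have "real P2 ^ 5 \<le> (16 * ln (real n)) ^ 5" by (rule power_mono[OF P2r]) simp
        ultimately show ?thesis using rn by (intro divide_right_mono mult_mono mult_left_mono) auto
      qed
      also have "\<dots> = B2 (real n)" unfolding B2_def using rn
        by (simp add: field_simps)
      finally show "real (n + mm) * \<beta> \<le> B2 (real n)" .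
    qed simp
    finally have cb: "real (card Bad) \<le> B2 (real n) * real (card G)" .
    show ?thesis unfolding G_def[symmetric] r_def[symmetric]
    proof (rule prob_lower[OF fG GNE _ _ cb])
      show "Bad \<subseteq> G" unfolding Bad_def Badv_def by blast
      fix E assume E: "E \<in> G" "E \<notin> Bad"
      have "bicycle_free_at n mm E r" unfolding bicycle_free_at_def
      proof (intro ballI allI impI)
        fix v C C' assume v: "v \<in> Inl ` {..<n} \<union> Inr ` {..<mm}"
          and C: "is_cycle (ball_graph E v r) C" and C': "is_cycle (ball_graph E v r) C'"
        show "C = C'"
        proof (rule ccontr)
          assume "C \<noteq> C'"
          then obtain e1 e2 where "e1 \<in> ExtraE E v r" "e2 \<in> ExtraE E v r" "e1 \<noteq> e2" using two_cycles_Ex[OF C C'] by blast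
          hence "E \<in> Badv v" unfolding Badv_def using E by blast
          moreover have "v \<in> VV n mm" using v unfolding VV_def .
          ultimately show False using E unfolding Bad_def by blast
        qed
      qed
      thus "E \<in> {E. bicycle_free_at n mm E r}" by simp
    qed
  qed
qed

lemma lim_aux:
  assumes Nlim: "filterlim N at_top sequentially"
    and Bl: "((\<lambda>x::real. B x) \<longlongrightarrow> 0) at_top"
    and low: "\<And>k. big (real (N k)) \<Longrightarrow> 1 - B (real (N k)) \<le> f k"
    and ev: "eventually big at_top"
    and up: "\<And>k. f k \<le> (1::real)"
  shows "f \<longlonglongrightarrow> 1"
proof -
  have rN: "filterlim (\<lambda>k. real (N k)) at_top sequentially"
    by (rule filterlim_compose[OF filterlim_real_sequentially Nlim])
  have evk: "eventually (\<lambda>k. big (real (N k))) sequentially"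
    by (rule eventually_compose_filterlim[OF ev rN])
  have "((\<lambda>k. B (real (N k))) \<longlongrightarrow> 0) sequentially"
    by (rule filterlim_compose[OF Bl rN])
  hence l: "((\<lambda>k. 1 - B (real (N k))) \<longlongrightarrow> 1 - 0) sequentially" by (intro tendsto_diff) auto
  show ?thesis
  proof (rule tendsto_sandwich[OF _ _ l[simplified] tendsto_const])
    show "eventually (\<lambda>k. 1 - B (real (N k)) \<le> f k) sequentially" using evk by eventually_elim (rule low)
    show "eventually (\<lambda>k. f k \<le> 1) sequentially" using up by simp
  qed
qed

lemma B1_lim: "(B1 \<longlongrightarrow> 0) at_top" unfolding B1_def by real_asymp
lemma B2_lim: "(B2 \<longlongrightarrow> 0) at_top" unfolding B2_def by real_asymp
lemma big_ev: "eventually (\<lambda>x::real. 4 * x powr (1/100) + 18 * ln x \<le> x) at_top" by real_asymp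

theorem proposition4p1:
  "\<exists>c>0. \<forall>(c0::real) (\<alpha>::real) (N::nat \<Rightarrow> nat) (m::nat \<Rightarrow> nat) (s::nat \<Rightarrow> nat)
      (t::nat \<Rightarrow> nat) (L::nat \<Rightarrow> nat).
     0 < c0 \<and> c0 < 1 \<and> 0 < \<alpha> \<and> \<alpha> < 1 \<and> filterlim N at_top sequentially \<and>
     (\<forall>k. real (m k) = \<alpha> * real (N k) \<and> real (t k) = \<alpha> * real (s k) \<and> t k \<ge> 3
          \<and> real (s k) \<le> real (N k) powr c0
          \<and> 1 \<le> L k \<and> real (L k) \<le> c * ln (real (m k)) / ln (real (t k * s k)))
     \<longrightarrow>
     ((\<lambda>k. measure_pmf.prob (pmf_of_set (biregular_graphs (m k) (N k) (s k) (t k)))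
              {E. \<exists>i < N k. \<forall>C. \<not> is_cycle (ball_graph E (Inl i) (2 * L k + 1)) C})
        \<longlonglongrightarrow> 1)
   \<and> ((\<lambda>k. measure_pmf.prob (pmf_of_set (biregular_graphs (m k) (N k) (s k) (t k)))
              {E. bicycle_free_at (N k) (m k) E (2 * L k + 1)})
        \<longlonglongrightarrow> 1)"
proof (rule exI[of _ "1/100"], intro conjI allI impI)
  show "(0::real) < 1/100" by simp
  fix c0 \<alpha> :: real and N m s t L :: "nat \<Rightarrow> nat"
  assume H: "0 < c0 \<and> c0 < 1 \<and> 0 < \<alpha> \<and> \<alpha> < 1 \<and> filterlim N at_top sequentially \<and>
     (\<forall>k. real (m k) = \<alpha> * real (N k) \<and> real (t k) = \<alpha> * real (s k) \<and> t k \<ge> 3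
          \<and> real (s k) \<le> real (N k) powr c0
          \<and> 1 \<le> L k \<and> real (L k) \<le> 1/100 * ln (real (m k)) / ln (real (t k * s k)))"
  have \<alpha>: "0 < \<alpha>" "\<alpha> < 1" and Nlim: "filterlim N at_top sequentially" using H by blast+
  have Hk: "real (m k) = \<alpha> * real (N k)" "real (t k) = \<alpha> * real (s k)" "3 \<le> t k" "1 \<le> L k"
      "real (L k) \<le> 1/100 * ln (real (m k)) / ln (real (t k * s k))" for k
  proof -
    have HK: "\<forall>k. real (m k) = \<alpha> * real (N k) \<and> real (t k) = \<alpha> * real (s k) \<and> t k \<ge> 3
          \<and> real (s k) \<le> real (N k) powr c0
          \<and> 1 \<le> L k \<and> real (L k) \<le> 1/100 * ln (real (m k)) / ln (real (t k * s k))" using H by blast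
    note h = spec[OF HK, of k]
    show "real (m k) = \<alpha> * real (N k)" using h by blast
    show "real (t k) = \<alpha> * real (s k)" using h by blast
    show "3 \<le> t k" using h by blast
    show "1 \<le> L k" using h by blast
    show "real (L k) \<le> 1/100 * ln (real (m k)) / ln (real (t k * s k))" using h by blast
  qed
  note mb = main_bound[OF \<alpha> Hk(1) Hk(2) Hk(3) Hk(4) Hk(5)]
  show "(\<lambda>k. measure_pmf.prob (pmf_of_set (biregular_graphs (m k) (N k) (s k) (t k)))
              {E. \<exists>i < N k. \<forall>C. \<not> is_cycle (ball_graph E (Inl i) (2 * L k + 1)) C}) \<longlonglongrightarrow> 1"
  proof (rule lim_aux[OF Nlim B1_lim _ big_ev])
    fix k assume "4 * real (N k) powr (1/100) + 18 * ln (real (N k)) \<le> real (N k)"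
    thus "1 - B1 (real (N k)) \<le> measure_pmf.prob (pmf_of_set (biregular_graphs (m k) (N k) (s k) (t k)))
              {E. \<exists>i < N k. \<forall>C. \<not> is_cycle (ball_graph E (Inl i) (2 * L k + 1)) C}" by (rule mb(1))
  next
    fix k show "measure_pmf.prob (pmf_of_set (biregular_graphs (m k) (N k) (s k) (t k)))
              {E. \<exists>i < N k. \<forall>C. \<not> is_cycle (ball_graph E (Inl i) (2 * L k + 1)) C} \<le> 1" by (rule measure_pmf.prob_le_1)
  qed
  show "(\<lambda>k. measure_pmf.prob (pmf_of_set (biregular_graphs (m k) (N k) (s k) (t k)))
              {E. bicycle_free_at (N k) (m k) E (2 * L k + 1)}) \<longlonglongrightarrow> 1"
  proof (rule lim_aux[OF Nlim B2_lim _ big_ev])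
    fix k assume "4 * real (N k) powr (1/100) + 18 * ln (real (N k)) \<le> real (N k)"
    thus "1 - B2 (real (N k)) \<le> measure_pmf.prob (pmf_of_set (biregular_graphs (m k) (N k) (s k) (t k)))
              {E. bicycle_free_at (N k) (m k) E (2 * L k + 1)}" by (rule mb(2))
  next
    fix k show "measure_pmf.prob (pmf_of_set (biregular_graphs (m k) (N k) (s k) (t k)))
              {E. bicycle_free_at (N k) (m k) E (2 * L k + 1)} \<le> 1" by (rule measure_pmf.prob_le_1)
  qed
qed

end
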